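(* Let $\gamma$ be a closed geodesic on $S=\mathbb{D}/\Gamma$. A lift $\widetilde{\gamma}\subset\mathbb{D}$ of $\gamma$ intersects the fundamental domain $\mathcal{P}$ if and only if $\widetilde{\gamma}\in\mathcal{L}_{cyc}(\gamma)$.
   Context: $\mathbb{D}$ is the Poincaré disk with center $O$. For a hyperbolic isometry $h$, $D(h)$ is the closed half-plane bounded by the perpendicular bisector of $[O,h(O)]$ and containing $h(O)$. Let $a,b$ be hyperbolic isometries with inverses $\bar a,\bar b$ such that $[D(a)\cup D(\bar a)]\cap[D(b)\cup D(\bar b)]=\emptyset$; $\Gamma=\langle a,b\rangle$ is a rank-2 Schottky group, $S=\mathbb{D}/\Gamma$ (a pair of pants or a punctured torus), and $\mathcal{P}=\bigcap_{e\in\{a,\bar a,b,\bar b\}}(\mathbb{D}\setminus\mathring{D}(e))$ is a fundamental domain. For a geodesic $\widetilde\gamma$ with endpoints in the limit set meeting $\mathcal{P}$, its coding is the bi-infinite word $(e_n)_{n\in\mathbb{Z}}$ with $g_{n+1}=g_ne_n$, where $(g_n\mathcal{P})$ is the sequence of tiles crossed by $\widetilde\gamma$ and $g_0=\mathrm{Id}$. For a closed geodesic $\gamma$ on $S$ and a lift crossing $\mathcal{P}$, this coding is periodic, $\cdots www\cdots$, with $w=e_1\cdots e_n$ a cyclically reduced word (the coding of $\gamma$). For $i=1,\dots,n$ let $w_i=e_ie_{i+1}\cdots e_ne_1\cdots e_{i-1}$ and let $\widetilde\gamma_i$ be the lift of $\gamma$ whose endpoints are the attracting and repelling fixed points of $w_i\in\Gamma$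 (i.e. with forward endpoint coded by $w_iw_i\cdots$ and backward endpoint by $\bar w_i\bar w_i\cdots$). $\mathcal{L}_{cyc}(\gamma)=\{\widetilde\gamma_1,\dots,\widetilde\gamma_n\}$. *)

theory Defs
  imports "HOL-Analysis.Analysis"
begin

definition disk :: "complex set" where
  "disk = ball 0 1"

definition hdist :: "complex \<Rightarrow> complex \<Rightarrow> real" where
  "hdist z w = arcosh (1 + 2 * (cmod (z - w))^2 / ((1 - (cmod z)^2) * (1 - (cmod w)^2)))"

text \<open>Isometries are represented by matrices [[al, be],[cnj be, cnj al]] in SU(1,1),
  encoded as pairs (al, be) with |al|^2 - |be|^2 = 1.\<close>
type_synonym mat = "complex \<times> complex"

definition su11 :: "mat \<Rightarrow> bool" where
  "su11 m \<longleftrightarrow> (cmod (fst m))^2 - (cmod (snd m))^2 = 1"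

definition moeb :: "mat \<Rightarrow> complex \<Rightarrow> complex" where
  "moeb m z = (fst m * z + snd m) / (cnj (snd m) * z + cnj (fst m))"

definition mmul :: "mat \<Rightarrow> mat \<Rightarrow> mat" where
  "mmul m n = (fst m * fst n + snd m * cnj (snd n), fst m * snd n + snd m * cnj (fst n))"

definition minv :: "mat \<Rightarrow> mat" where
  "minv m = (cnj (fst m), - snd m)"

definition mid :: mat where
  "mid = (1, 0)"

text \<open>Hyperbolic type: |trace| > 2.\<close>
definition hyperbolic_type :: "mat \<Rightarrow> bool" where
  "hyperbolic_type m \<longleftrightarrow> su11 m \<and> \<bar>Re (fst m)\<bar> > 1"

definition Dhalf :: "mat \<Rightarrow> complex set" where
  "Dhalf h = {z \<in> disk. hdist z (moeb h 0) \<le> hdist z 0}"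

datatype letter = A | Ainv | B | Binv

definition letter_mat :: "mat \<Rightarrow> mat \<Rightarrow> letter \<Rightarrow> mat" where
  "letter_mat a b l = (case l of A \<Rightarrow> a | Ainv \<Rightarrow> minv a | B \<Rightarrow> b | Binv \<Rightarrow> minv b)"

definition word_mat :: "mat \<Rightarrow> mat \<Rightarrow> letter list \<Rightarrow> mat" where
  "word_mat a b w = foldr (\<lambda>l m. mmul (letter_mat a b l) m) w mid"

definition schottky :: "mat \<Rightarrow> mat \<Rightarrow> bool" where
  "schottky a b \<longleftrightarrow> hyperbolic_type a \<and> hyperbolic_type b \<and>
     (Dhalf a \<union> Dhalf (minv a)) \<inter> (Dhalf b \<union> Dhalf (minv b)) = {}"

definition Gamma :: "mat \<Rightarrow> mat \<Rightarrow> mat set" where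
  "Gamma a b = {word_mat a b w | w. True}"

definition fundom :: "mat \<Rightarrow> mat \<Rightarrow> complex set" where
  "fundom a b = (\<Inter>e\<in>{a, minv a, b, minv b}. disk - interior (Dhalf e))"

definition tile :: "mat \<Rightarrow> mat \<Rightarrow> mat \<Rightarrow> complex set" where
  "tile a b g = moeb g ` fundom a b"

definition geodesic_param :: "(real \<Rightarrow> complex) \<Rightarrow> complex \<Rightarrow> complex \<Rightarrow> bool" where
  "geodesic_param c p q \<longleftrightarrow>
     (\<forall>t. c t \<in> disk) \<and> (\<forall>s t. hdist (c s) (c t) = \<bar>s - t\<bar>) \<and>
     (c \<longlongrightarrow> q) at_top \<and> (c \<longlongrightarrow> p) at_bot"

definition attracting_fp :: "mat \<Rightarrow> complex" where
  "attracting_fp g = (THE \<xi>. cmod \<xi> = 1 \<and> moeb g \<xi> = \<xi> \<and>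
                        (\<lambda>n. (moeb g ^^ n) 0) \<longlonglongrightarrow> \<xi>)"

definition repelling_fp :: "mat \<Rightarrow> complex" where
  "repelling_fp g = attracting_fp (minv g)"

definition axis :: "mat \<Rightarrow> complex set" where
  "axis g = {z. \<exists>c. geodesic_param c (repelling_fp g) (attracting_fp g) \<and> z \<in> range c}"

text \<open>The closed geodesic gamma on S determined by a nontrivial g in Gamma: its lifts are
  the axes of the conjugates h g h^-1, h in Gamma.\<close>
definition lifts :: "mat \<Rightarrow> mat \<Rightarrow> mat \<Rightarrow> complex set set" where
  "lifts a b g = {axis (mmul (mmul h g) (minv h)) | h. h \<in> Gamma a b}"

definition coding :: "mat \<Rightarrow> mat \<Rightarrow> (real \<Rightarrow> complex) \<Rightarrow> (int \<Rightarrow> letter) \<Rightarrow> bool" where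
  "coding a b c e \<longleftrightarrow>
     (\<exists>s :: int \<Rightarrow> real. \<exists>g :: int \<Rightarrow> mat.
        strict_mono s \<and> filterlim s at_top at_top \<and> filterlim s at_bot at_bot \<and>
        g 0 = mid \<and> (\<forall>n. g (n + 1) = mmul (g n) (letter_mat a b (e n))) \<and>
        (\<forall>n. c ` {s n .. s (n + 1)} \<subseteq> tile a b (g n)))"

definition Lcyc :: "mat \<Rightarrow> mat \<Rightarrow> (int \<Rightarrow> letter) \<Rightarrow> nat \<Rightarrow> complex set set" where
  "Lcyc a b e n = {axis (word_mat a b (rotate i (map (\<lambda>k. e (int k)) [0..<n]))) | i. i < n}"

end

theory Submission
  imports Defs "HOL-Real_Asymp.Real_Asymp"
begin

definition Qf :: "complex \<Rightarrow> complex \<Rightarrow> real" where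
  "Qf z w = 1 + 2 * (cmod (z - w))^2 / ((1 - (cmod z)^2) * (1 - (cmod w)^2))"

lemma in_disk: "z \<in> disk \<longleftrightarrow> cmod z < 1"
  by (simp add: disk_def)

lemma disk_pos: "z \<in> disk \<Longrightarrow> 0 < 1 - (cmod z)^2"
proof -
  assume "z \<in> disk"
  hence "cmod z < 1" by (simp add: disk_def)
  hence "cmod z * cmod z < 1" using norm_ge_zero[of z] by (smt (verit) mult_left_le_one_le mult_le_one norm_ge_zero mult_less_cancel_right2)
  thus ?thesis by (simp add: power2_eq_square)
qed

lemma Qf_ge1: "z \<in> disk \<Longrightarrow> w \<in> disk \<Longrightarrow> 1 \<le> Qf z w"
  using disk_pos[of z] disk_pos[of w] by (simp add: Qf_def)

lemma Qf_sym: "Qf z w = Qf w z"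
  by (simp add: Qf_def norm_minus_commute mult.commute)

lemma hdist_Qf: "hdist z w = arcosh (Qf z w)"
  by (simp add: hdist_def Qf_def)

lemma cosh_hdist: "z \<in> disk \<Longrightarrow> w \<in> disk \<Longrightarrow> cosh (hdist z w) = Qf z w"
  by (simp add: hdist_Qf cosh_arcosh_real Qf_ge1)

lemma hdist_le_iff:
  assumes "z \<in> disk" "w \<in> disk" "z' \<in> disk" "w' \<in> disk"
  shows "hdist z w \<le> hdist z' w' \<longleftrightarrow> Qf z w \<le> Qf z' w'"
  using arcosh_less_iff_real[OF Qf_ge1[OF assms(3,4)] Qf_ge1[OF assms(1,2)]]
  by (simp add: hdist_Qf not_less[symmetric])

lemma hdist_less_iff:
  assumes "z \<in> disk" "w \<in> disk" "z' \<in> disk" "w' \<in> disk"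
  shows "hdist z w < hdist z' w' \<longleftrightarrow> Qf z w < Qf z' w'"
  using arcosh_less_iff_real[OF Qf_ge1[OF assms(1,2)] Qf_ge1[OF assms(3,4)]]
  by (simp add: hdist_Qf)

lemma hdist_eq_iff:
  assumes "z \<in> disk" "w \<in> disk" "z' \<in> disk" "w' \<in> disk"
  shows "hdist z w = hdist z' w' \<longleftrightarrow> Qf z w = Qf z' w'"
  using hdist_le_iff[OF assms] hdist_le_iff[OF assms(3,4,1,2)] by linarith

lemma su11_norm: "su11 m \<Longrightarrow> (cmod (fst m))^2 = 1 + (cmod (snd m))^2"
  by (simp add: su11_def)

lemma su11_lt: "su11 m \<Longrightarrow> cmod (snd m) < cmod (fst m)"
proof -
  assume "su11 m"
  hence "(cmod (snd m))^2 < (cmod (fst m))^2" by (simp add: su11_norm)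
  thus ?thesis by (simp add: power_less_imp_less_base)
qed

lemma den_nz:
  assumes "su11 m" "cmod z \<le> 1"
  shows "cnj (snd m) * z + cnj (fst m) \<noteq> 0"
proof
  assume "cnj (snd m) * z + cnj (fst m) = 0"
  hence "cnj (fst m) = - (cnj (snd m) * z)" by (simp add: add_eq_0_iff2)
  hence "cmod (fst m) = cmod (snd m) * cmod z" by (metis complex_mod_cnj norm_minus_cancel norm_mult)
  also have "\<dots> \<le> cmod (snd m)" using assms(2) by (simp add: mult_left_le)
  finally show False using su11_lt[OF assms(1)] by simp
qed

lemma cmod_sq: "(cmod z)^2 = (Re z)^2 + (Im z)^2"
  by (simp add: cmod_power2)

lemma norm_den_num:
  assumes "su11 m"
  shows "(cmod (cnj (snd m) * z + cnj (fst m)))^2 - (cmod (fst m * z + snd m))^2 = 1 - (cmod z)^2"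
proof -
  obtain a b where m: "m = (a, b)" by force
  have s: "(Re a)^2 + (Im a)^2 = 1 + (Re b)^2 + (Im b)^2" using su11_norm[OF assms] by (simp add: m cmod_sq)
  show ?thesis unfolding m cmod_sq using s
    by (simp add: power2_eq_square algebra_simps) (simp add: power2_eq_square[symmetric]; algebra)
qed

lemma zcnj: "z * cnj z = complex_of_real ((cmod z)^2)"
  by (rule complex_norm_square[symmetric])

lemma moeb_eq: "moeb m z = (fst m * z + snd m) / (cnj (snd m) * z + cnj (fst m))"
  by (simp add: moeb_def)

lemma one_minus_moeb:
  assumes "su11 m" "cmod z \<le> 1"
  shows "1 - (cmod (moeb m z))^2 = (1 - (cmod z)^2) / (cmod (cnj (snd m) * z + cnj (fst m)))^2"
proof -
  let ?d = "cnj (snd m) * z + cnj (fst m)" and ?n = "fst m * z + snd m"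
  have d: "cmod ?d \<noteq> 0" using den_nz[OF assms] by simp
  have "(cmod (moeb m z))^2 = (cmod ?n)^2 / (cmod ?d)^2" by (simp add: moeb_def norm_divide power_divide)
  hence "1 - (cmod (moeb m z))^2 = ((cmod ?d)^2 - (cmod ?n)^2) / (cmod ?d)^2" using d by (simp add: field_simps)
  thus ?thesis using norm_den_num[OF assms(1)] by simp
qed

lemma moeb_disk: "su11 m \<Longrightarrow> z \<in> disk \<Longrightarrow> moeb m z \<in> disk"
proof -
  assume a: "su11 m" "z \<in> disk"
  hence z1: "cmod z \<le> 1" by (simp add: in_disk)
  have "0 < (1 - (cmod z)^2) / (cmod (cnj (snd m) * z + cnj (fst m)))^2"
    using disk_pos[OF a(2)] den_nz[OF a(1) z1] by simp
  hence "0 < 1 - (cmod (moeb m z))^2" using one_minus_moeb[OF a(1) z1] by simp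
  hence "(cmod (moeb m z))^2 < 1^2" by simp
  hence "cmod (moeb m z) < 1" using power_less_imp_less_base by fastforce
  thus ?thesis by (simp add: in_disk)
qed

lemma moeb_circle: "su11 m \<Longrightarrow> cmod z = 1 \<Longrightarrow> cmod (moeb m z) = 1"
proof -
  assume a: "su11 m" "cmod z = 1"
  have "1 - (cmod (moeb m z))^2 = 0" using one_minus_moeb[OF a(1)] a(2) by simp
  hence "(cmod (moeb m z))^2 = 1^2" by simp
  thus ?thesis using norm_ge_zero power2_eq_iff_nonneg by (metis zero_le_one)
qed

lemma moeb_cdisk: "su11 m \<Longrightarrow> cmod z \<le> 1 \<Longrightarrow> cmod (moeb m z) \<le> 1"
  using moeb_disk[of m z] moeb_circle[of m z] by (force simp: in_disk)

lemma moeb_diff: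
  assumes "su11 m" "cmod z \<le> 1" "cmod w \<le> 1"
  shows "moeb m z - moeb m w = (z - w) / ((cnj (snd m) * z + cnj (fst m)) * (cnj (snd m) * w + cnj (fst m)))"
proof -
  obtain a b where m: "m = (a, b)" by force
  have s: "a * cnj a - b * cnj b = 1"
  proof -
    have "(cmod a)^2 - (cmod b)^2 = 1" using assms(1) by (simp add: m su11_def)
    hence "complex_of_real ((cmod a)^2 - (cmod b)^2) = 1" by simp
    thus ?thesis by (simp only: zcnj of_real_diff)
  qed
  have d1: "cnj b * z + cnj a \<noteq> 0" using den_nz[OF assms(1,2)] by (simp add: m)
  have d2: "cnj b * w + cnj a \<noteq> 0" using den_nz[OF assms(1,3)] by (simp add: m)
  have "(a * z + b) * (cnj b * w + cnj a) - (a * w + b) * (cnj b * z + cnj a) = (a * cnj a - b * cnj b) * (z - w)"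
    by (simp add: algebra_simps)
  also have "\<dots> = z - w" using s by simp
  finally have e: "(a * z + b) * (cnj b * w + cnj a) - (a * w + b) * (cnj b * z + cnj a) = z - w" .
  show ?thesis unfolding m moeb_def using d1 d2 e
    by (simp add: divide_simps)
qed

lemma Qf_moeb:
  assumes "su11 m" "z \<in> disk" "w \<in> disk"
  shows "Qf (moeb m z) (moeb m w) = Qf z w"
proof -
  let ?dz = "cnj (snd m) * z + cnj (fst m)" and ?dw = "cnj (snd m) * w + cnj (fst m)"
  have z1: "cmod z \<le> 1" and w1: "cmod w \<le> 1" using assms by (auto simp: in_disk)
  have dz: "cmod ?dz \<noteq> 0" using den_nz[OF assms(1) z1] by simp
  have dw: "cmod ?dw \<noteq> 0" using den_nz[OF assms(1) w1] by simp
  have "(cmod (moeb m z - moeb m w))^2 = (cmod (z - w))^2 / ((cmod ?dz)^2 * (cmod ?dw)^2)"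
    by (simp add: moeb_diff[OF assms(1) z1 w1] norm_divide norm_mult power_divide power_mult_distrib)
  moreover have "(1 - (cmod (moeb m z))^2) * (1 - (cmod (moeb m w))^2) =
     ((1 - (cmod z)^2) * (1 - (cmod w)^2)) / ((cmod ?dz)^2 * (cmod ?dw)^2)"
    by (simp add: one_minus_moeb[OF assms(1) z1] one_minus_moeb[OF assms(1) w1])
  ultimately show ?thesis using dz dw by (simp add: Qf_def)
qed

lemma hdist_moeb: "su11 m \<Longrightarrow> z \<in> disk \<Longrightarrow> w \<in> disk \<Longrightarrow> hdist (moeb m z) (moeb m w) = hdist z w"
  by (simp add: hdist_Qf Qf_moeb)

lemma mmul_assoc: "mmul (mmul x y) z = mmul x (mmul y z)"
  by (simp add: mmul_def algebra_simps)

lemma mmul_mid[simp]: "mmul m mid = m" and mid_mmul[simp]: "mmul mid m = m"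
  by (simp_all add: mmul_def mid_def)

lemma minv_minv[simp]: "minv (minv m) = m"
  by (simp add: minv_def)

lemma minv_mmul: "minv (mmul x y) = mmul (minv y) (minv x)"
  by (simp add: minv_def mmul_def algebra_simps)

lemma minv_mid[simp]: "minv mid = mid"
  by (simp add: minv_def mid_def)

lemma su11_cnj: "su11 m \<Longrightarrow> fst m * cnj (fst m) - snd m * cnj (snd m) = 1"
proof -
  assume "su11 m"
  hence "complex_of_real ((cmod (fst m))^2 - (cmod (snd m))^2) = 1" by (simp add: su11_def)
  thus ?thesis by (simp only: zcnj of_real_diff)
qed

lemma mmul_minv: "su11 m \<Longrightarrow> mmul m (minv m) = mid"
  using su11_cnj[of m] by (simp add: mmul_def minv_def mid_def algebra_simps)

lemma minv_mmul_self: "su11 m \<Longrightarrow> mmul (minv m) m = mid"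
  using su11_cnj[of m] by (simp add: mmul_def minv_def mid_def algebra_simps)

lemma su11_minv: "su11 m \<Longrightarrow> su11 (minv m)"
  by (simp add: su11_def minv_def)

lemma su11_mid: "su11 mid"
  by (simp add: su11_def mid_def)

lemma su11_mmul: assumes "su11 m" "su11 n" shows "su11 (mmul m n)"
proof -
  obtain a b where m: "m = (a,b)" by force
  obtain c d where n: "n = (c,d)" by force
  have s1: "a * cnj a - b * cnj b = 1" using su11_cnj[OF assms(1)] by (simp add: m)
  have s2: "c * cnj c - d * cnj d = 1" using su11_cnj[OF assms(2)] by (simp add: n)
  let ?x = "a * c + b * cnj d" and ?y = "a * d + b * cnj c"
  have "?x * cnj ?x - ?y * cnj ?y = (a * cnj a - b * cnj b) * (c * cnj c - d * cnj d)"
    by (simp add: algebra_simps)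
  also have "\<dots> = 1" using s1 s2 by simp
  finally have e: "?x * cnj ?x - ?y * cnj ?y = 1" .
  have "complex_of_real ((cmod ?x)^2 - (cmod ?y)^2) = 1" using e by (simp only: zcnj of_real_diff)
  hence "(cmod ?x)^2 - (cmod ?y)^2 = 1" using of_real_eq_1_iff by blast
  thus ?thesis by (simp add: su11_def mmul_def m n)
qed

lemma moeb_mid[simp]: "moeb mid z = z"
  by (simp add: moeb_def mid_def)

lemma moeb_mmul:
  assumes "su11 m" "su11 n" "cmod z \<le> 1"
  shows "moeb (mmul m n) z = moeb m (moeb n z)"
proof -
  obtain a b where m: "m = (a,b)" by force
  obtain c d where n: "n = (c,d)" by force
  have dn: "cnj d * z + cnj c \<noteq> 0" using den_nz[OF assms(2,3)] by (simp add: n)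
  have w1: "cmod (moeb n z) \<le> 1" using moeb_cdisk[OF assms(2,3)] .
  have dm: "cnj b * moeb n z + cnj a \<noteq> 0" using den_nz[OF assms(1) w1] by (simp add: m)
  have dm': "cnj b * (c * z + d) + cnj a * (cnj d * z + cnj c) \<noteq> 0"
  proof -
    have "cnj b * (c * z + d) + cnj a * (cnj d * z + cnj c) = (cnj b * moeb n z + cnj a) * (cnj d * z + cnj c)"
      using dn by (simp add: n moeb_def field_simps)
    thus ?thesis using dm dn by simp
  qed
  show ?thesis using dn dm dm' unfolding m n moeb_def mmul_def
    by (simp add: divide_simps) (simp add: algebra_simps)
qed

lemma moeb_minv_moeb: "su11 m \<Longrightarrow> cmod z \<le> 1 \<Longrightarrow> moeb (minv m) (moeb m z) = z"
  by (metis moeb_mmul su11_minv minv_mmul_self moeb_mid)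

lemma moeb_moeb_minv: "su11 m \<Longrightarrow> cmod z \<le> 1 \<Longrightarrow> moeb m (moeb (minv m) z) = z"
  by (metis moeb_mmul su11_minv mmul_minv moeb_mid)

lemma isCont_moeb: "su11 m \<Longrightarrow> cmod z \<le> 1 \<Longrightarrow> isCont (moeb m) z"
  unfolding moeb_def[abs_def] using den_nz[of m z]
  by (auto intro!: continuous_intros)

type_synonym v3 = "real \<times> real \<times> real"

definition Bf :: "v3 \<Rightarrow> v3 \<Rightarrow> real" where
  "Bf x y = fst x * fst y - fst (snd x) * fst (snd y) - snd (snd x) * snd (snd y)"

definition Xv :: "complex \<Rightarrow> v3" where
  "Xv z = ((1 + (cmod z)^2) / (1 - (cmod z)^2), 2 * Re z / (1 - (cmod z)^2), 2 * Im z / (1 - (cmod z)^2))"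

definition Zf :: "v3 \<Rightarrow> complex" where
  "Zf x = Complex (fst (snd x) / (1 + fst x)) (snd (snd x) / (1 + fst x))"

definition Nv :: "complex \<Rightarrow> v3" where
  "Nv q = (1, Re q, Im q)"

lemma Bf_sym: "Bf x y = Bf y x" by (simp add: Bf_def algebra_simps)
lemma Bf_add_l[simp]: "Bf (x + y) z = Bf x z + Bf y z" by (simp add: Bf_def algebra_simps)
lemma Bf_add_r[simp]: "Bf z (x + y) = Bf z x + Bf z y" by (simp add: Bf_def algebra_simps)
lemma Bf_diff_l[simp]: "Bf (x - y) z = Bf x z - Bf y z" by (simp add: Bf_def algebra_simps)
lemma Bf_diff_r[simp]: "Bf z (x - y) = Bf z x - Bf z y" by (simp add: Bf_def algebra_simps)
lemma Bf_scale_l[simp]: "Bf (r *\<^sub>R x) z = r * Bf x z" by (simp add: Bf_def algebra_simps)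
lemma Bf_scale_r[simp]: "Bf z (r *\<^sub>R x) = r * Bf z x" by (simp add: Bf_def algebra_simps)
lemma Bf_zero_l[simp]: "Bf 0 z = 0" by (simp add: Bf_def)
lemma Bf_zero_r[simp]: "Bf z 0 = 0" by (simp add: Bf_def)

lemma Qf_B:
  assumes "z \<in> disk" "w \<in> disk"
  shows "Qf z w = Bf (Xv z) (Xv w)"
proof -
  have dz: "1 - (cmod z)^2 \<noteq> 0" and dw: "1 - (cmod w)^2 \<noteq> 0" using disk_pos assms by (metis less_irrefl)+
  define a where "a = 1 - (cmod z)^2"
  define b where "b = 1 - (cmod w)^2"
  have n: "(cmod (z - w))^2 = (Re z - Re w)^2 + (Im z - Im w)^2" by (simp add: cmod_sq)
  have a0: "a \<noteq> 0" and b0: "b \<noteq> 0" using dz dw by (simp_all add: a_def b_def)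
  have key: "a * b + 2 * (cmod (z - w))^2 = (1 + (cmod z)^2) * (1 + (cmod w)^2) - 2 * Re z * (2 * Re w) - 2 * Im z * (2 * Im w)"
    unfolding a_def b_def n cmod_sq by (simp add: power2_eq_square algebra_simps)
  have "Bf (Xv z) (Xv w) = ((1 + (cmod z)^2) * (1 + (cmod w)^2) - 2 * Re z * (2 * Re w) - 2 * Im z * (2 * Im w)) / (a * b)"
    unfolding Bf_def Xv_def a_def[symmetric] b_def[symmetric] using a0 b0 by (simp add: field_simps)
  also have "\<dots> = (a * b + 2 * (cmod (z - w))^2) / (a * b)" using key by simp
  also have "\<dots> = Qf z w" unfolding Qf_def a_def[symmetric] b_def[symmetric] using a0 b0 by (simp add: field_simps)
  finally show ?thesis by simp
qed

lemma Bf_Xv_self: "z \<in> disk \<Longrightarrow> Bf (Xv z) (Xv z) = 1"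
  using Qf_B[of z z] by (simp add: Qf_def)

lemma Zf_Xv: assumes "z \<in> disk" shows "Zf (Xv z) = z"
proof -
  have d: "0 < 1 - (cmod z)^2" using disk_pos assms by auto
  have e: "1 + (1 + (cmod z)^2) / (1 - (cmod z)^2) = 2 / (1 - (cmod z)^2)" using d by (simp add: field_simps)
  show ?thesis unfolding Zf_def Xv_def using d by (simp add: e complex_eq_iff)
qed

lemma Xv_inj: "z \<in> disk \<Longrightarrow> w \<in> disk \<Longrightarrow> Xv z = Xv w \<Longrightarrow> z = w"
  by (metis Zf_Xv)

lemma Xv_fst_pos: "z \<in> disk \<Longrightarrow> 0 < fst (Xv z)"
  using disk_pos[of z] by (simp add: Xv_def add_pos_nonneg)

lemma scaled_Xv: "z \<in> disk \<Longrightarrow> (1 - (cmod z)^2) *\<^sub>R Xv z = (1 + (cmod z)^2, 2 * Re z, 2 * Im z)"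
  using disk_pos[of z] by (simp add: Xv_def)

text \<open>The key positivity lemma: the B-orthogonal complement of a unit timelike vector is negative definite.\<close>
lemma Bf_null_orth:
  assumes "Bf U U = 1" "Bf Y U = 0" "Bf Y Y = 0"
  shows "Y = 0"
proof -
  obtain u0 u1 u2 where U: "U = (u0, u1, u2)" by (metis prod.collapse)
  obtain y0 y1 y2 where Y: "Y = (y0, y1, y2)" by (metis prod.collapse)
  have h1: "u0^2 = 1 + u1^2 + u2^2" using assms(1) by (simp add: U Bf_def power2_eq_square)
  have h2: "y0 * u0 = y1 * u1 + y2 * u2" using assms(2) by (simp add: U Y Bf_def)
  have h3: "y0^2 = y1^2 + y2^2" using assms(3) by (simp add: Y Bf_def power2_eq_square)
  have cs: "(y1 * u1 + y2 * u2)^2 \<le> (y1^2 + y2^2) * (u1^2 + u2^2)"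
  proof -
    have "(y1^2+y2^2)*(u1^2+u2^2) - (y1*u1+y2*u2)^2 = (y1*u2 - y2*u1)^2" by (simp add: power2_eq_square algebra_simps)
    thus ?thesis by (smt (verit) zero_le_power2)
  qed
  have "(y1^2 + y2^2) * u0^2 = (y0 * u0)^2" using h3 by (simp add: power_mult_distrib)
  also have "\<dots> \<le> (y1^2 + y2^2) * (u1^2 + u2^2)" using h2 cs by simp
  finally have "(y1^2 + y2^2) * (1 + u1^2 + u2^2) \<le> (y1^2 + y2^2) * (u1^2 + u2^2)" using h1 by simp
  hence "y1^2 + y2^2 \<le> 0" by (simp add: algebra_simps)
  hence "y1 = 0" "y2 = 0" by (smt (verit) zero_le_power2 power_zero_numeral zero_eq_power2)+
  moreover hence "y0 = 0" using h3 by simp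
  ultimately show ?thesis by (simp add: Y zero_prod_def)
qed

lemma geo_disk: "geodesic_param c p q \<Longrightarrow> c t \<in> disk"
  by (simp add: geodesic_param_def)

lemma geo_Q: assumes "geodesic_param c p q" shows "Qf (c s) (c t) = cosh (s - t)"
proof -
  have "hdist (c s) (c t) = \<bar>s - t\<bar>" using assms by (simp add: geodesic_param_def)
  hence "cosh (hdist (c s) (c t)) = cosh (s - t)" by (simp add: cosh_real_abs)
  thus ?thesis using cosh_hdist geo_disk assms by metis
qed

lemma geo_B: assumes "geodesic_param c p q" shows "Bf (Xv (c s)) (Xv (c t)) = cosh (s - t)"
  using geo_Q[OF assms] Qf_B geo_disk assms by metis

lemma hyp_id: fixes x y :: real
  assumes "x\<^sup>2 - y\<^sup>2 = 1" "a\<^sup>2 - b\<^sup>2 = 1" "b \<noteq> 0"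
  shows "1 + (x - y * a / b)\<^sup>2 + (y / b)\<^sup>2 - 2 * (x - y * a / b) * x - 2 * (y / b) * (x * a - y * b) + 2 * (x - y * a / b) * (y / b) * a = 0"
proof -
  have "b^2 * (1 + (x - y * a / b)\<^sup>2 + (y / b)\<^sup>2 - 2 * (x - y * a / b) * x - 2 * (y / b) * (x * a - y * b) + 2 * (x - y * a / b) * (y / b) * a)
     = b^2 + (x*b - y*a)^2 + y^2 - 2*(x*b - y*a)*x*b - 2*y*(x*a - y*b)*b + 2*(x*b - y*a)*y*a"
    using assms(3) by (simp add: field_simps power2_eq_square)
  also have "\<dots> = b^2 * (1 - x^2 + y^2) + y^2 * (1 - a^2 + b^2)" by (simp add: power2_eq_square algebra_simps)
  also have "\<dots> = 0" using assms(1,2) by (simp add: algebra_simps)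
  finally show ?thesis using assms(3) by simp
qed

lemma LINE:
  assumes g: "geodesic_param c p q"
  shows "\<exists>U V. Bf U U = 1 \<and> Bf V V = -1 \<and> Bf U V = 0 \<and> (\<forall>t. Xv (c t) = cosh t *\<^sub>R U + sinh t *\<^sub>R V)"
proof -
  define U where "U = Xv (c 0)"
  define W where "W = Xv (c 1)"
  define V where "V = (1 / sinh 1) *\<^sub>R (W - cosh 1 *\<^sub>R U)"
  have s1: "sinh (1::real) \<noteq> 0" by (simp add: sinh_real_zero_iff)
  have hp1: "(cosh (1::real))^2 - (sinh 1)^2 = 1" by (rule hyperbolic_pythagoras)
  have UU: "Bf U U = 1" using geo_B[OF g, of 0 0] by (simp add: U_def)
  have WW: "Bf W W = 1" using geo_B[OF g, of 1 1] by (simp add: W_def)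
  have UW: "Bf U W = cosh 1" using geo_B[OF g, of 0 1] by (simp add: U_def W_def)
  have WU: "Bf W U = cosh 1" using UW Bf_sym by metis
  have UV: "Bf U V = 0" using UU UW s1 by (simp add: V_def)
  have VV: "Bf V V = -1"
  proof -
    have "Bf V V * (sinh 1)^2 = 1 - (cosh 1)^2"
      unfolding V_def using UU UW WU WW s1 by (simp add: power2_eq_square field_simps)
    also have "\<dots> = -((sinh 1)^2)" using hp1 by simp
    finally have "(Bf V V + 1) * (sinh 1)^2 = 0" by (simp add: algebra_simps)
    thus ?thesis using s1 by simp
  qed
  have main: "Xv (c t) = cosh t *\<^sub>R U + sinh t *\<^sub>R V" for t
  proof -
    let ?X = "Xv (c t)"
    define Y where "Y = ?X - cosh t *\<^sub>R U - sinh t *\<^sub>R V"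
    have XX: "Bf ?X ?X = 1" using geo_B[OF g, of t t] by simp
    have XU: "Bf ?X U = cosh t" using geo_B[OF g, of t 0] by (simp add: U_def)
    have UX: "Bf U ?X = cosh t" using XU Bf_sym by metis
    have XW: "Bf ?X W = cosh t * cosh 1 - sinh t * sinh 1" using geo_B[OF g, of t 1] by (simp add: W_def cosh_diff)
    have WX: "Bf W ?X = cosh t * cosh 1 - sinh t * sinh 1" using XW Bf_sym by metis
    have YU: "Bf Y U = 0" unfolding Y_def V_def using XU UU WU s1 by (simp add: field_simps)
    have XV: "Bf ?X V = - sinh t"
    proof -
      have "Bf ?X V = (Bf ?X W - cosh 1 * Bf ?X U) / sinh 1" by (simp add: V_def diff_divide_distrib)
      also have "\<dots> = - sinh t" using s1 by (simp add: XW XU field_simps)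
      finally show ?thesis .
    qed
    have VX: "Bf V ?X = - sinh t" using XV Bf_sym by metis
    have VU: "Bf V U = 0" using UV Bf_sym by metis
    have YY: "Bf Y Y = 0"
    proof -
      have "Bf Y Y = 1 - (cosh t)^2 + (sinh t)^2"
        unfolding Y_def by (simp add: XX XU UX XV VX UU UV VU VV power2_eq_square algebra_simps)
      also have "\<dots> = 0" using hyperbolic_pythagoras[of t] by simp
      finally show ?thesis .
    qed
    have "Y = 0" by (rule Bf_null_orth[OF UU YU YY])
    thus ?thesis by (simp add: Y_def algebra_simps)
  qed
  show ?thesis using UU VV UV main by blast
qed

lemma LIMDIR:
  fixes f g :: "'a \<Rightarrow> v3"
  assumes "(f \<longlongrightarrow> Av) F" "(g \<longlongrightarrow> Gv) F" "\<forall>\<^sub>F t in F. g t = r t *\<^sub>R f t" "fst Av \<noteq> 0" "F \<noteq> bot"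
  shows "Gv = (fst Gv / fst Av) *\<^sub>R Av"
proof -
  have f1: "((\<lambda>t. fst (f t)) \<longlongrightarrow> fst Av) F" using assms(1) by (rule tendsto_fst)
  have g1: "((\<lambda>t. fst (g t)) \<longlongrightarrow> fst Gv) F" using assms(2) by (rule tendsto_fst)
  have ev: "\<forall>\<^sub>F t in F. fst (f t) \<noteq> 0" using f1 assms(4) by (rule tendsto_imp_eventually_ne)
  have "\<forall>\<^sub>F t in F. r t = fst (g t) / fst (f t)"
    using ev assms(3) by eventually_elim simp
  hence "((\<lambda>t. r t) \<longlongrightarrow> fst Gv / fst Av) F"
    using tendsto_divide[OF g1 f1 assms(4)] by (simp add: tendsto_cong)
  hence "((\<lambda>t. r t *\<^sub>R f t) \<longlongrightarrow> (fst Gv / fst Av) *\<^sub>R Av) F" using assms(1) by (rule tendsto_scaleR)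
  hence "(g \<longlongrightarrow> (fst Gv / fst Av) *\<^sub>R Av) F" using assms(3) by (simp add: tendsto_cong)
  thus ?thesis using assms(2,5) tendsto_unique by blast
qed

lemma Bf_Nv_self: "cmod q = 1 \<Longrightarrow> Bf (Nv q) (Nv q) = 0"
  using cmod_sq[of q] by (simp add: Bf_def Nv_def power2_eq_square)

lemma END1:
  assumes UU: "Bf U U = 1" and AU: "Bf Av U = 1" and AA: "Bf Av Av = 0"
    and cq: "(c \<longlongrightarrow> q) F" and F: "F \<noteq> bot" and disk: "\<And>t. c t \<in> disk"
    and sp: "\<And>t. 0 < s t" and fA: "((\<lambda>t. s t *\<^sub>R Xv (c t)) \<longlongrightarrow> Av) F"
  shows "cmod q = 1 \<and> Av = fst Av *\<^sub>R Nv q \<and> 0 < fst Av"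
proof -
  obtain a0 a1 a2 where Av: "Av = (a0, a1, a2)" by (metis prod.collapse)
  have A0: "a0 \<noteq> 0"
  proof
    assume "a0 = 0"
    hence e': "- (a1 * a1) = a2 * a2" using AA by (simp add: Av Bf_def)
    have "a1 * a1 = 0" "a2 * a2 = 0" using e' zero_le_square[of a1] zero_le_square[of a2] by linarith+
    hence "a1 = 0" "a2 = 0" by simp_all
    with \<open>a0 = 0\<close> have "Av = 0" by (simp add: Av zero_prod_def)
    thus False using AU by simp
  qed
  define Gv where "Gv = (1 + (cmod q)^2, 2 * Re q, 2 * Im q)"
  have gl: "((\<lambda>t. (1 - (cmod (c t))^2) *\<^sub>R Xv (c t)) \<longlongrightarrow> Gv) F"
  proof -
    have "((\<lambda>t. (1 + (cmod (c t))^2, 2 * Re (c t), 2 * Im (c t))) \<longlongrightarrow> Gv) F"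
      unfolding Gv_def using cq by (auto intro!: tendsto_intros)
    moreover have "(1 - (cmod (c t))^2) *\<^sub>R Xv (c t) = (1 + (cmod (c t))^2, 2 * Re (c t), 2 * Im (c t))" for t
      using scaled_Xv[OF disk] by simp
    ultimately show ?thesis by simp
  qed
  have rel: "\<forall>\<^sub>F t in F. (1 - (cmod (c t))^2) *\<^sub>R Xv (c t) = ((1 - (cmod (c t))^2) / s t) *\<^sub>R (s t *\<^sub>R Xv (c t))"
    using sp by (simp add: less_imp_neq[symmetric])
  have GA: "Gv = (fst Gv / fst Av) *\<^sub>R Av" by (rule LIMDIR[OF fA gl rel _ F]) (simp add: Av A0)
  hence "Bf Gv Gv = (fst Gv / fst Av)^2 * Bf Av Av" by (metis Bf_scale_l Bf_scale_r mult.assoc power2_eq_square)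
  hence "Bf Gv Gv = 0" using AA by simp
  moreover have "Bf Gv Gv = (1 + (cmod q)^2)^2 - 4 * ((Re q)^2 + (Im q)^2)"
    by (simp add: Gv_def Bf_def power2_eq_square algebra_simps)
  ultimately have "(1 + (cmod q)^2)^2 - 4 * (cmod q)^2 = 0" by (simp add: cmod_sq)
  hence "(1 - (cmod q)^2)^2 = 0" by (simp add: power2_eq_square algebra_simps)
  hence "(cmod q)^2 = 1" by simp
  hence q1: "cmod q = 1" using norm_ge_zero[of q] by (auto simp add: power2_eq_1_iff)
  have G2: "Gv = 2 *\<^sub>R Nv q" by (simp add: Gv_def Nv_def q1)
  have "Av = (fst Av / 2) *\<^sub>R Gv"
  proof -
    have "fst Gv = 2" using G2 by (simp add: Nv_def)
    thus ?thesis using GA A0 by (simp add: Av)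
  qed
  hence AN: "Av = fst Av *\<^sub>R Nv q" using G2 by simp
  have "0 \<le> fst Av"
  proof (rule tendsto_lowerbound[OF tendsto_fst[OF fA]])
    show "\<forall>\<^sub>F t in F. 0 \<le> fst (s t *\<^sub>R Xv (c t))"
      using sp Xv_fst_pos[OF disk] by (simp add: less_imp_le)
  qed (rule F)
  hence "0 < fst Av" using A0 by (simp add: Av)
  thus ?thesis using q1 AN by simp
qed

lemma exp2: "exp (2*t) = exp t * exp t" for t :: real
  by (metis exp_add mult_2)
lemma exp_mm: "exp t * exp (-t) = 1" for t :: real
  by (simp add: exp_minus)
lemma ch_a: "2 * exp t * cosh t = exp(2*t) + 1" for t :: real
  unfolding cosh_field_def exp2 using exp_mm[of t] by (simp add: algebra_simps)
lemma sh_a: "2 * exp t * sinh t = exp(2*t) - 1" for t :: real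
proof -
  have "2 * exp t * sinh t = exp t * exp t - exp t * exp (-t)" unfolding sinh_field_def by (simp add: field_simps)
  thus ?thesis using exp_mm[of t] exp2[of t] by simp
qed
lemma ch_b: "2 * exp (-t) * cosh t = exp(2*(-t)) + 1" for t :: real
  using ch_a[of "-t"] by simp
lemma sh_b: "2 * exp (-t) * sinh t = 1 - exp(2*(-t))" for t :: real
  using sh_a[of "-t"] by simp

lemma ENDPT:
  assumes g: "geodesic_param c p q"
  shows "cmod p = 1 \<and> cmod q = 1 \<and> (\<exists>k k'. 0 < k \<and> 0 < k' \<and>
           (\<forall>t. Xv (c t) = (exp t * k / 2) *\<^sub>R Nv q + (exp (-t) * k' / 2) *\<^sub>R Nv p))"
proof -
  obtain U V where UU: "Bf U U = 1" and VV: "Bf V V = -1" and UV: "Bf U V = 0"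
    and X: "\<And>t. Xv (c t) = cosh t *\<^sub>R U + sinh t *\<^sub>R V" using LINE[OF g] by blast
  have VU: "Bf V U = 0" using UV Bf_sym by metis
  have dk: "\<And>t. c t \<in> disk" using g by (simp add: geodesic_param_def)
  have cq: "(c \<longlongrightarrow> q) at_top" and cp: "(c \<longlongrightarrow> p) at_bot" using g by (simp_all add: geodesic_param_def)
  have l1: "((\<lambda>t::real. exp(2*(-t))) \<longlongrightarrow> 0) at_top" by real_asymp
  have l2: "((\<lambda>t::real. exp(2*t)) \<longlongrightarrow> 0) at_bot" by real_asymp
  have top: "((\<lambda>t. (2 * exp (-t)) *\<^sub>R Xv (c t)) \<longlongrightarrow> U + V) at_top"
  proof -
    have "(2 * exp (-t)) *\<^sub>R Xv (c t) = (exp(2*(-t)) + 1) *\<^sub>R U + (1 - exp(2*(-t))) *\<^sub>R V" for t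
      unfolding X using ch_b[of t] sh_b[of t] by (simp add: scaleR_add_right mult.assoc[symmetric])
    moreover have "((\<lambda>t. (exp(2*(-t)) + 1) *\<^sub>R U + (1 - exp(2*(-t))) *\<^sub>R V) \<longlongrightarrow> (0 + 1) *\<^sub>R U + (1 - 0) *\<^sub>R V) at_top"
      by (intro tendsto_intros l1)
    ultimately show ?thesis by simp
  qed
  have bot: "((\<lambda>t. (2 * exp t) *\<^sub>R Xv (c t)) \<longlongrightarrow> U - V) at_bot"
  proof -
    have "(2 * exp t) *\<^sub>R Xv (c t) = (exp(2*t) + 1) *\<^sub>R U + (exp(2*t) - 1) *\<^sub>R V" for t
      unfolding X using ch_a[of t] sh_a[of t] by (simp add: scaleR_add_right mult.assoc[symmetric])
    moreover have "((\<lambda>t. (exp(2*t) + 1) *\<^sub>R U + (exp(2*t) - 1) *\<^sub>R V) \<longlongrightarrow> (0 + 1) *\<^sub>R U + (0 - 1) *\<^sub>R V) at_bot"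
      by (intro tendsto_intros l2)
    ultimately show ?thesis by simp
  qed
  have e1: "cmod q = 1 \<and> U + V = fst (U + V) *\<^sub>R Nv q \<and> 0 < fst (U + V)"
    by (rule END1[OF UU _ _ cq trivial_limit_at_top_linorder dk _ top]) (simp_all add: UU UV VU VV)
  have e2: "cmod p = 1 \<and> U - V = fst (U - V) *\<^sub>R Nv p \<and> 0 < fst (U - V)"
    by (rule END1[OF UU _ _ cp trivial_limit_at_bot_linorder dk _ bot]) (simp_all add: UU UV VU VV)
  have "Xv (c t) = (exp t * fst (U + V) / 2) *\<^sub>R Nv q + (exp (-t) * fst (U - V) / 2) *\<^sub>R Nv p" for t
  proof -
    have "Xv (c t) = (exp t / 2) *\<^sub>R (U + V) + (exp (-t) / 2) *\<^sub>R (U - V)"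
      unfolding X cosh_field_def sinh_field_def
      by (simp add: scaleR_add_right scaleR_diff_right scaleR_add_left scaleR_diff_left add_divide_distrib diff_divide_distrib algebra_simps)
    also have "\<dots> = (exp t * fst (U + V) / 2) *\<^sub>R Nv q + (exp (-t) * fst (U - V) / 2) *\<^sub>R Nv p"
      using e1 e2 by (metis (no_types, lifting) scaleR_scaleR times_divide_eq_left mult.commute)
    finally show ?thesis .
  qed
  thus ?thesis using e1 e2 by blast
qed

lemma Bf_NN: assumes "cmod q = 1" "cmod p = 1" shows "Bf (Nv q) (Nv q) = 0" "Bf (Nv p) (Nv p) = 0"
  using Bf_Nv_self assms by auto

lemma ENDPT2:
  assumes g: "geodesic_param c p q"
  obtains k k' where "0 < k" "0 < k'" "cmod p = 1" "cmod q = 1"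
    "\<And>t. Xv (c t) = (exp t * k / 2) *\<^sub>R Nv q + (exp (-t) * k' / 2) *\<^sub>R Nv p"
    "k * k' * Bf (Nv q) (Nv p) = 2"
proof -
  obtain k k' where k: "0 < k" "0 < k'" and p1: "cmod p = 1" and q1: "cmod q = 1"
    and X: "\<And>t. Xv (c t) = (exp t * k / 2) *\<^sub>R Nv q + (exp (-t) * k' / 2) *\<^sub>R Nv p"
    using ENDPT[OF g] by blast
  have "Bf (Xv (c 0)) (Xv (c 0)) = 1" using Bf_Xv_self geo_disk[OF g] by blast
  hence "1 = Bf ((k / 2) *\<^sub>R Nv q + (k' / 2) *\<^sub>R Nv p) ((k / 2) *\<^sub>R Nv q + (k' / 2) *\<^sub>R Nv p)"
    using X[of 0] by simp
  also have "\<dots> = k * k' * Bf (Nv q) (Nv p) / 2"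
    using Bf_NN[OF q1 p1] Bf_sym[of "Nv p" "Nv q"] by (simp add: algebra_simps)
  finally have "k * k' * Bf (Nv q) (Nv p) = 2" by simp
  thus ?thesis using that k p1 q1 X by blast
qed

lemma geo_ends_ne: "geodesic_param c p q \<Longrightarrow> p \<noteq> q"
proof
  assume g: "geodesic_param c p q" and e: "p = q"
  obtain k k' where "cmod q = 1" "k * k' * Bf (Nv q) (Nv p) = 2" using ENDPT2[OF g] by metis
  thus False using e Bf_Nv_self by simp
qed

lemma geo_ends_circle: "geodesic_param c p q \<Longrightarrow> cmod p = 1 \<and> cmod q = 1"
  using ENDPT2 by metis

lemma SHIFT:
  assumes g1: "geodesic_param c p q" and g2: "geodesic_param c' p q"
  shows "\<exists>\<tau>. \<forall>t. c' t = c (t + \<tau>)"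
proof -
  obtain k1 k1' where k1: "0 < k1" "0 < k1'"
    and X1: "\<And>t. Xv (c t) = (exp t * k1 / 2) *\<^sub>R Nv q + (exp (-t) * k1' / 2) *\<^sub>R Nv p"
    and B1: "k1 * k1' * Bf (Nv q) (Nv p) = 2" using ENDPT2[OF g1] by metis
  obtain k2 k2' where k2: "0 < k2" "0 < k2'"
    and X2: "\<And>t. Xv (c' t) = (exp t * k2 / 2) *\<^sub>R Nv q + (exp (-t) * k2' / 2) *\<^sub>R Nv p"
    and B2: "k2 * k2' * Bf (Nv q) (Nv p) = 2" using ENDPT2[OF g2] by metis
  have kk: "k1 * k1' = k2 * k2'" using B1 B2 by (metis mult_cancel_right zero_neq_numeral mult_zero_right)
  define \<tau> where "\<tau> = ln (k2 / k1)"
  have et: "exp \<tau> = k2 / k1" using k1 k2 by (simp add: \<tau>_def)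
  have "c' t = c (t + \<tau>)" for t
  proof -
    have a: "exp (t + \<tau>) * k1 = exp t * k2" using et k1 by (simp add: exp_add)
    have b: "exp (- (t + \<tau>)) * k1' = exp (-t) * k2'"
    proof -
      have "exp (- (t + \<tau>)) = exp (-t) / exp \<tau>" by (simp add: exp_diff[symmetric])
      hence e: "exp (- (t + \<tau>)) = exp (-t) * (k1 / k2)" using et k1 k2 by simp
      have "exp (- (t + \<tau>)) * k1' = exp (-t) * (k1 * k1' / k2)" unfolding e by simp
      also have "\<dots> = exp (-t) * k2'" using kk k2 by simp
      finally show ?thesis .
    qed
    have "Xv (c (t + \<tau>)) = Xv (c' t)" unfolding X1 X2 using a b
      by (metis (no_types, lifting) minus_add_distrib times_divide_eq_left)
    thus ?thesis using Xv_inj geo_disk g1 g2 by metis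
  qed
  thus ?thesis by blast
qed

lemma PSI:
  assumes g: "geodesic_param c p q" and a0: "a0 \<in> disk" and a1: "a1 \<in> disk"
  shows "\<exists>A1 B1. \<forall>t. Qf (c t) a0 - Qf (c t) a1 = A1 * exp t + B1 * exp (-t)"
proof -
  obtain k k' where
    X: "\<And>t. Xv (c t) = (exp t * k / 2) *\<^sub>R Nv q + (exp (-t) * k' / 2) *\<^sub>R Nv p"
    using ENDPT2[OF g] by metis
  have "Qf (c t) a0 - Qf (c t) a1 =
     (k / 2 * (Bf (Nv q) (Xv a0) - Bf (Nv q) (Xv a1))) * exp t + (k' / 2 * (Bf (Nv p) (Xv a0) - Bf (Nv p) (Xv a1))) * exp (-t)" for t
    using Qf_B[OF geo_disk[OF g] a0] Qf_B[OF geo_disk[OF g] a1] X[of t] by (simp add: algebra_simps)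
  thus ?thesis by blast
qed

lemma LIN_a:
  fixes A1 B1 :: real
  assumes "t1 \<le> t" "t \<le> t2" "0 \<le> A1 * exp t1 + B1 * exp (-t1)" "0 \<le> A1 * exp t2 + B1 * exp (-t2)"
  shows "0 \<le> A1 * exp t + B1 * exp (-t)"
proof -
  have lin: "\<And>u. A1 * exp u + B1 * exp (-u) = exp (-u) * (A1 * exp (2*u) + B1)"
    unfolding exp2 by (simp add: exp_minus field_simps)
  define y1 y y2 where "y1 = exp (2*t1)" "y = exp (2*t)" "y2 = exp (2*t2)"
  have ys: "y1 \<le> y" "y \<le> y2" using assms(1,2) by (simp_all add: y1_y_y2_def)
  have l1: "0 \<le> A1 * y1 + B1" using assms(3) lin[of t1] by (simp add: y1_y_y2_def zero_le_mult_iff)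
  have l2: "0 \<le> A1 * y2 + B1" using assms(4) lin[of t2] by (simp add: y1_y_y2_def zero_le_mult_iff)
  have "0 \<le> A1 * y + B1"
  proof (cases "A1 \<ge> 0")
    case True
    hence "A1 * y1 \<le> A1 * y" using ys by (simp add: mult_left_mono)
    thus ?thesis using l1 by linarith
  next
    case False
    hence "A1 * y2 \<le> A1 * y" using ys by (simp add: mult_left_mono_neg)
    thus ?thesis using l2 by linarith
  qed
  thus ?thesis using lin[of t] by (simp add: y1_y_y2_def)
qed

lemma LIN_b:
  fixes A1 B1 :: real
  assumes "t1 < t" "t < t2" "0 \<le> A1 * exp t1 + B1 * exp (-t1)" "0 \<le> A1 * exp t2 + B1 * exp (-t2)"
    "A1 * exp t + B1 * exp (-t) = 0"
  shows "A1 = 0 \<and> B1 = 0"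
proof -
  have lin: "\<And>u. A1 * exp u + B1 * exp (-u) = exp (-u) * (A1 * exp (2*u) + B1)"
    unfolding exp2 by (simp add: exp_minus field_simps)
  define y1 y y2 where "y1 = exp (2*t1)" "y = exp (2*t)" "y2 = exp (2*t2)"
  have ys: "y1 < y" "y < y2" using assms(1,2) by (simp_all add: y1_y_y2_def)
  have l1: "0 \<le> A1 * y1 + B1" using assms(3) lin[of t1] by (simp add: y1_y_y2_def zero_le_mult_iff)
  have l2: "0 \<le> A1 * y2 + B1" using assms(4) lin[of t2] by (simp add: y1_y_y2_def zero_le_mult_iff)
  have l: "A1 * y + B1 = 0" using assms(5) lin[of t] by (simp add: y1_y_y2_def)
  have "A1 * (y1 - y) \<ge> 0" using l1 l by (simp add: algebra_simps)
  hence "A1 \<le> 0" using ys by (simp add: zero_le_mult_iff)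
  moreover have "A1 * (y2 - y) \<ge> 0" using l2 l by (simp add: algebra_simps)
  hence "A1 \<ge> 0" using ys by (simp add: zero_le_mult_iff)
  ultimately have "A1 = 0" by simp
  thus ?thesis using l by simp
qed

lemma LIN_c:
  fixes A1 B1 :: real
  assumes "u \<noteq> t" "A1 * exp u + B1 * exp (-u) = 0" "A1 * exp t + B1 * exp (-t) = 0"
  shows "A1 = 0 \<and> B1 = 0"
proof -
  have lin: "\<And>u. A1 * exp u + B1 * exp (-u) = exp (-u) * (A1 * exp (2*u) + B1)"
    unfolding exp2 by (simp add: exp_minus field_simps)
  have a: "A1 * exp (2*u) + B1 = 0" using assms(2) lin[of u] by simp
  have b: "A1 * exp (2*t) + B1 = 0" using assms(3) lin[of t] by simp
  have "A1 * exp (2*u) - A1 * exp (2*t) = 0" using a b by linarith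
  hence "A1 * (exp (2*u) - exp (2*t)) = 0" by (simp only: right_diff_distrib)
  moreover have "exp (2*u) \<noteq> exp (2*t)" using assms(1) by simp
  ultimately have "A1 = 0" by simp
  thus ?thesis using a by simp
qed

lemma geo_moeb:
  assumes g: "geodesic_param c p q" and m: "su11 m"
  shows "geodesic_param (\<lambda>t. moeb m (c t)) (moeb m p) (moeb m q)"
proof -
  have p1: "cmod p \<le> 1" and q1: "cmod q \<le> 1" using geo_ends_circle[OF g] by auto
  have "(c \<longlongrightarrow> q) at_top" "(c \<longlongrightarrow> p) at_bot" using g by (simp_all add: geodesic_param_def)
  hence "((\<lambda>t. moeb m (c t)) \<longlongrightarrow> moeb m q) at_top" "((\<lambda>t. moeb m (c t)) \<longlongrightarrow> moeb m p) at_bot"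
    using isCont_tendsto_compose isCont_moeb[OF m] p1 q1 by blast+
  moreover have "\<forall>t. moeb m (c t) \<in> disk" using moeb_disk[OF m] geo_disk[OF g] by blast
  moreover have "\<forall>s t. hdist (moeb m (c s)) (moeb m (c t)) = \<bar>s - t\<bar>"
    using hdist_moeb[OF m] geo_disk[OF g] g by (simp add: geodesic_param_def)
  ultimately show ?thesis by (simp add: geodesic_param_def)
qed

lemma BD:
  assumes zq: "(z \<longlongrightarrow> q) F" and q1: "cmod q = 1" and zd: "\<And>x. z x \<in> disk" and yd: "\<And>x. y x \<in> disk"
    and M: "\<And>x. Qf (z x) (y x) \<le> M"
  shows "(y \<longlongrightarrow> q) F"
proof -
  have w0: "((\<lambda>x. (M - 1) / 2 * (1 - (cmod (z x))^2)) \<longlongrightarrow> (M - 1) / 2 * (1 - (cmod q)^2)) F"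
    using zq by (intro tendsto_intros)
  hence w: "((\<lambda>x. (M - 1) / 2 * (1 - (cmod (z x))^2)) \<longlongrightarrow> 0) F" using q1 by simp
  have bnd: "(cmod (z x - y x))^2 \<le> (M - 1) / 2 * (1 - (cmod (z x))^2)" for x
  proof -
    have pz: "0 < 1 - (cmod (z x))^2" and py: "0 < 1 - (cmod (y x))^2" using disk_pos zd yd by auto
    have py1: "1 - (cmod (y x))^2 \<le> 1" by simp
    define dd where "dd = (1 - (cmod (z x))^2) * (1 - (cmod (y x))^2)"
    have dd0: "dd \<noteq> 0" using pz py by (simp add: dd_def)
    have "Qf (z x) (y x) - 1 = 2 * (cmod (z x - y x))^2 / dd"
      by (simp add: Qf_def dd_def)
    hence "(Qf (z x) (y x) - 1) * dd = 2 * (cmod (z x - y x))^2" using dd0 by simp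
    hence e: "(cmod (z x - y x))^2 = (Qf (z x) (y x) - 1) / 2 * ((1 - (cmod (z x))^2) * (1 - (cmod (y x))^2))"
      unfolding dd_def by simp
    have Q0: "0 \<le> Qf (z x) (y x) - 1" using Qf_ge1 zd yd by simp
    have "(1 - (cmod (z x))^2) * (1 - (cmod (y x))^2) \<le> (1 - (cmod (z x))^2)"
      using pz py1 by (simp add: mult_left_le)
    hence "(Qf (z x) (y x) - 1) / 2 * ((1 - (cmod (z x))^2) * (1 - (cmod (y x))^2)) \<le> (Qf (z x) (y x) - 1) / 2 * (1 - (cmod (z x))^2)"
      using Q0 by (intro mult_left_mono) (simp_all)
    also have "\<dots> \<le> (M - 1) / 2 * (1 - (cmod (z x))^2)"
      using M[of x] pz by (intro mult_right_mono) simp_all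
    finally show ?thesis using e by simp
  qed
  have ev1: "\<forall>\<^sub>F x in F. 0 \<le> (cmod (z x - y x))^2" by simp
  have ev2: "\<forall>\<^sub>F x in F. (cmod (z x - y x))^2 \<le> (M - 1) / 2 * (1 - (cmod (z x))^2)"
    using bnd by (intro always_eventually) blast
  have "((\<lambda>x. (cmod (z x - y x))^2) \<longlongrightarrow> 0) F"
    by (rule tendsto_sandwich[OF ev1 ev2 tendsto_const w])
  hence "((\<lambda>x. sqrt ((cmod (z x - y x))^2)) \<longlongrightarrow> sqrt 0) F" by (rule tendsto_real_sqrt)
  hence "((\<lambda>x. cmod (z x - y x)) \<longlongrightarrow> 0) F" by simp
  hence "((\<lambda>x. z x - y x) \<longlongrightarrow> 0) F" by (simp add: tendsto_norm_zero_iff)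
  hence "((\<lambda>x. z x - (z x - y x)) \<longlongrightarrow> q - 0) F" using zq by (intro tendsto_diff)
  thus ?thesis by simp
qed

definition nice :: "mat \<Rightarrow> complex \<Rightarrow> bool" where
  "nice h \<xi> \<longleftrightarrow> cmod \<xi> = 1 \<and> moeb h \<xi> = \<xi> \<and> (\<forall>z\<in>disk. (\<lambda>j. (moeb h ^^ j) z) \<longlonglongrightarrow> \<xi>)"

lemma zero_disk[simp]: "0 \<in> disk" by (simp add: disk_def)

lemma nice_att: assumes "nice h \<xi>" shows "attracting_fp h = \<xi>"
  unfolding attracting_fp_def
proof (rule the_equality)
  show "cmod \<xi> = 1 \<and> moeb h \<xi> = \<xi> \<and> (\<lambda>n. (moeb h ^^ n) 0) \<longlonglongrightarrow> \<xi>" using assms by (simp add: nice_def)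
next
  fix \<eta> assume "cmod \<eta> = 1 \<and> moeb h \<eta> = \<eta> \<and> (\<lambda>n. (moeb h ^^ n) 0) \<longlonglongrightarrow> \<eta>"
  moreover have "(\<lambda>n. (moeb h ^^ n) 0) \<longlonglongrightarrow> \<xi>" using assms by (simp add: nice_def)
  ultimately show "\<eta> = \<xi>" using LIMSEQ_unique by blast
qed

lemma nice_rep: "nice (minv h) \<xi> \<Longrightarrow> repelling_fp h = \<xi>"
  by (simp add: repelling_fp_def nice_att)

lemma fixed_eq:
  assumes "su11 h" "cmod \<xi> \<le> 1" "moeb h \<xi> = \<xi>"
  shows "fst h * \<xi> + snd h = \<xi> * (cnj (snd h) * \<xi> + cnj (fst h))"
proof -
  have d: "cnj (snd h) * \<xi> + cnj (fst h) \<noteq> 0" using den_nz assms by blast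
  thus ?thesis using assms(3) by (simp add: moeb_def divide_eq_eq mult.commute)
qed

lemma FIXID:
  assumes h: "su11 h" and x1: "cmod \<xi> \<le> 1" and fx: "moeb h \<xi> = \<xi>" and z1: "cmod z \<le> 1"
  shows "moeb h z - \<xi> = (fst h - cnj (snd h) * \<xi>) * (z - \<xi>) / (cnj (snd h) * z + cnj (fst h))"
proof -
  have d: "cnj (snd h) * z + cnj (fst h) \<noteq> 0" using den_nz h z1 by blast
  have fe: "fst h * \<xi> + snd h = \<xi> * (cnj (snd h) * \<xi> + cnj (fst h))" using fixed_eq[OF h x1 fx] .
  have "fst h * z + snd h - \<xi> * (cnj (snd h) * z + cnj (fst h)) = (fst h - cnj (snd h) * \<xi>) * (z - \<xi>)"
  proof -
    have "snd h = \<xi> * (cnj (snd h) * \<xi> + cnj (fst h)) - fst h * \<xi>" using fe by (simp add: algebra_simps)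
    thus ?thesis by (simp add: algebra_simps)
  qed
  thus ?thesis using d by (simp add: moeb_def field_simps)
qed

lemma circle_fixed_Im:
  assumes h: "su11 h" and x1: "cmod \<xi> = 1" and fx: "moeb h \<xi> = \<xi>"
  shows "Im (cnj (snd h) * \<xi>) = Im (fst h)"
proof -
  have fe: "fst h * \<xi> + snd h = \<xi> * (cnj (snd h) * \<xi> + cnj (fst h))" using fixed_eq[OF h _ fx] x1 by simp
  have xx: "\<xi> * cnj \<xi> = 1" using x1 by (simp add: zcnj)
  have "(fst h * \<xi> + snd h) * cnj \<xi> = (\<xi> * (cnj (snd h) * \<xi> + cnj (fst h))) * cnj \<xi>" using fe by simp
  hence "fst h * (\<xi> * cnj \<xi>) + snd h * cnj \<xi> = (\<xi> * cnj \<xi>) * (cnj (snd h) * \<xi> + cnj (fst h))"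
    by (simp add: algebra_simps)
  hence "fst h + snd h * cnj \<xi> = cnj (snd h) * \<xi> + cnj (fst h)" using xx by simp
  hence "Im (fst h + snd h * cnj \<xi>) = Im (cnj (snd h) * \<xi> + cnj (fst h))" by simp
  hence "Im (fst h) - Im (cnj (snd h) * \<xi>) = Im (cnj (snd h) * \<xi>) - Im (fst h)"
    by (simp add: algebra_simps)
  thus ?thesis by (simp add: algebra_simps)
qed

lemma su11_Re_Im: "su11 h \<Longrightarrow> (cmod (snd h))^2 = (Re (fst h))^2 + (Im (fst h))^2 - 1"
  using su11_norm[of h] cmod_sq[of "fst h"] by simp

lemma elliptic_no_fixed:
  assumes h: "su11 h" and t: "\<bar>Re (fst h)\<bar> < 1" and x1: "cmod \<xi> = 1" and fx: "moeb h \<xi> = \<xi>"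
  shows False
proof -
  let ?u = "cnj (snd h) * \<xi>"
  have im: "Im ?u = Im (fst h)" using circle_fixed_Im[OF h x1 fx] .
  have "(cmod ?u)^2 = (cmod (snd h))^2" using x1 by (simp add: norm_mult)
  also have "\<dots> = (Re (fst h))^2 + (Im (fst h))^2 - 1" using su11_Re_Im[OF h] .
  also have "\<dots> < (Im (fst h))^2" using t by (simp add: abs_square_less_1)
  finally have "(cmod ?u)^2 < (Im ?u)^2" using im by simp
  moreover have "(Im ?u)^2 \<le> (cmod ?u)^2" using cmod_sq[of ?u] by simp
  ultimately show False by simp
qed

lemma iter_disk: "su11 h \<Longrightarrow> z \<in> disk \<Longrightarrow> (moeb h ^^ j) z \<in> disk"
  by (induction j) (auto intro: moeb_disk)

lemma GEN:
  assumes h: "su11 h" and b: "snd h \<noteq> 0" and rho: "\<rho>^2 = (Re (fst h))^2 - 1"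
    and tr: "Re (fst h) + \<rho> \<noteq> 0"
    and xi: "\<xi> = (\<i> * of_real (Im (fst h)) + of_real \<rho>) / cnj (snd h)"
  shows "cmod \<xi> = 1" "moeb h \<xi> = \<xi>" "fst h - cnj (snd h) * \<xi> = of_real (Re (fst h) - \<rho>)"
    "cnj (snd h) * \<xi> + cnj (fst h) = of_real (Re (fst h) + \<rho>)"
proof -
  obtain a be where hh: "h = (a, be)" by force
  let ?t = "Re a" and ?s = "Im a"
  have b0: "be \<noteq> 0" using b by (simp add: hh)
  have u: "cnj be * \<xi> = \<i> * of_real ?s + of_real \<rho>" using b0 by (simp add: xi hh)
  have aa: "a = of_real ?t + \<i> * of_real ?s" by (simp add: complex_eq_iff)
  have nb: "(cmod be)^2 = ?s^2 + \<rho>^2" using su11_Re_Im[OF h] rho by (simp add: hh)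
  show e1: "fst h - cnj (snd h) * \<xi> = of_real (Re (fst h) - \<rho>)"
    using u by (simp add: hh complex_eq_iff)
  show e2: "cnj (snd h) * \<xi> + cnj (fst h) = of_real (Re (fst h) + \<rho>)"
    using u by (simp add: hh complex_eq_iff)
  have "(cmod (cnj be * \<xi>))^2 = ?s^2 + \<rho>^2" using u by (simp add: cmod_sq)
  hence "(cmod be)^2 * (cmod \<xi>)^2 = (cmod be)^2" using nb by (simp add: norm_mult power_mult_distrib)
  hence "(cmod \<xi>)^2 = 1" using b0 by simp
  thus "cmod \<xi> = 1" using norm_ge_zero[of \<xi>] by (auto simp: power2_eq_1_iff)
  have "a * \<xi> + be = of_real (?t + \<rho>) * \<xi>"
  proof -
    have "(\<i> * of_real ?s - of_real \<rho>) * (cnj be * \<xi>) = (\<i> * of_real ?s - of_real \<rho>) * (\<i> * of_real ?s + of_real \<rho>)"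
      by (simp only: u)
    also have "\<dots> = - complex_of_real (?s^2 + \<rho>^2)" by (simp add: complex_eq_iff power2_eq_square algebra_simps)
    also have "\<dots> = - complex_of_real ((cmod be)^2)" using nb by simp
    finally have "(\<i> * of_real ?s - of_real \<rho>) * (cnj be * \<xi>) = - complex_of_real ((cmod be)^2)" .
    hence "(\<i> * of_real ?s - of_real \<rho>) * \<xi> * cnj be = - be * cnj be"
      by (simp add: zcnj algebra_simps)
    hence "((\<i> * of_real ?s - of_real \<rho>) * \<xi>) * cnj be = (- be) * cnj be" by simp
    hence "(\<i> * of_real ?s - of_real \<rho>) * \<xi> = - be" using b0 by (metis mult_cancel_right complex_cnj_zero_iff)
    hence "(\<i> * of_real ?s - of_real \<rho>) * \<xi> = - be" .
    thus ?thesis by (subst aa) (simp add: algebra_simps)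
  qed
  moreover have "cnj be * \<xi> + cnj a = of_real (?t + \<rho>)" using e2 by (simp add: hh)
  ultimately show "moeb h \<xi> = \<xi>" using tr by (simp add: moeb_def hh del: of_real_add)
qed

lemma PARA:
  assumes h: "su11 h" and b: "snd h \<noteq> 0" and t: "(Re (fst h))^2 = 1"
  shows "nice h ((\<i> * of_real (Im (fst h)) + of_real 0) / cnj (snd h))"
proof -
  define \<xi> where "\<xi> = (\<i> * of_real (Im (fst h)) + of_real 0) / cnj (snd h)"
  define tt where "tt = Re (fst h)"
  have t0: "tt \<noteq> 0" using t by (auto simp: tt_def)
  have g1: "cmod \<xi> = 1" and g2: "moeb h \<xi> = \<xi>" and g3: "fst h - cnj (snd h) * \<xi> = of_real tt"
    and g4: "cnj (snd h) * \<xi> + cnj (fst h) = of_real tt"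
    using GEN[OF h b, of 0 \<xi>] t t0 by (simp_all add: \<xi>_def tt_def)
  have step: "inverse (moeb h z - \<xi>) = inverse (z - \<xi>) + cnj (snd h) / of_real tt" if z: "z \<in> disk" for z
  proof -
    have z1: "cmod z \<le> 1" using z by (simp add: in_disk)
    have zx: "z - \<xi> \<noteq> 0" using z g1 by (auto simp: in_disk)
    have d: "cnj (snd h) * z + cnj (fst h) \<noteq> 0" using den_nz[OF h z1] .
    have "moeb h z - \<xi> = of_real tt * (z - \<xi>) / (cnj (snd h) * z + cnj (fst h))"
      using FIXID[OF h _ g2 z1] g1 g3 by simp
    hence "inverse (moeb h z - \<xi>) = (cnj (snd h) * z + cnj (fst h)) / (of_real tt * (z - \<xi>))"
      by (simp add: inverse_eq_divide)
    also have "cnj (snd h) * z + cnj (fst h) = cnj (snd h) * (z - \<xi>) + of_real tt"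
      using g4 by (simp add: algebra_simps)
    finally show ?thesis using zx t0 by (simp add: field_simps)
  qed
  have iter: "inverse ((moeb h ^^ j) z - \<xi>) = inverse (z - \<xi>) + of_nat j * (cnj (snd h) / of_real tt)"
    if z: "z \<in> disk" for z j
  proof (induction j)
    case 0 thus ?case by simp
  next
    case (Suc j)
    have "inverse ((moeb h ^^ Suc j) z - \<xi>) = inverse ((moeb h ^^ j) z - \<xi>) + cnj (snd h) / of_real tt"
      using step[OF iter_disk[OF h z]] by simp
    thus ?case using Suc by (simp add: algebra_simps add_divide_distrib)
  qed
  have conv: "(\<lambda>j. (moeb h ^^ j) z) \<longlonglongrightarrow> \<xi>" if z: "z \<in> disk" for z
  proof -
    have c0: "cnj (snd h) / of_real tt \<noteq> 0" using b t0 by simp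
    have f1: "filterlim (\<lambda>j. (cnj (snd h) / of_real tt) * of_nat j) at_infinity sequentially"
      by (rule tendsto_mult_filterlim_at_infinity[OF tendsto_const c0 tendsto_of_nat])
    have f2: "filterlim (\<lambda>j. inverse (z - \<xi>) + (cnj (snd h) / of_real tt) * of_nat j) at_infinity sequentially"
      by (rule tendsto_add_filterlim_at_infinity[OF tendsto_const f1])
    have "((\<lambda>j. inverse (inverse (z - \<xi>) + (cnj (snd h) / of_real tt) * of_nat j)) \<longlongrightarrow> 0) sequentially"
      using filterlim_compose[OF tendsto_inverse_0 f2] by (simp add: o_def)
    moreover have "inverse (inverse (z - \<xi>) + (cnj (snd h) / of_real tt) * of_nat j) = (moeb h ^^ j) z - \<xi>" for j
      using iter[OF z, of j] by (metis inverse_inverse_eq mult.commute)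
    ultimately have "(\<lambda>j. (moeb h ^^ j) z - \<xi>) \<longlonglongrightarrow> 0" by simp
    hence "(\<lambda>j. ((moeb h ^^ j) z - \<xi>) + \<xi>) \<longlonglongrightarrow> 0 + \<xi>" by (intro tendsto_add tendsto_const)
    thus ?thesis by simp
  qed
  show ?thesis using g1 g2 conv by (simp add: nice_def \<xi>_def)
qed

lemma frac_ratio: "(D::complex) \<noteq> 0 \<Longrightarrow> (a * x / D) / (c * y / D) = (a / c) * (x / y)"
  by (simp add: divide_simps)

lemma HYP:
  assumes h: "su11 h" and t: "1 < Re (fst h)"
  shows "nice h ((\<i> * of_real (Im (fst h)) + of_real (sqrt ((Re (fst h))^2 - 1))) / cnj (snd h))"
proof -
  define tt where "tt = Re (fst h)"
  define r where "r = sqrt (tt^2 - 1)"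
  define xp where "xp = (\<i> * of_real (Im (fst h)) + of_real r) / cnj (snd h)"
  define xm where "xm = (\<i> * of_real (Im (fst h)) + of_real (-r)) / cnj (snd h)"
  have t1: "1 < tt" using t by (simp add: tt_def)
  have r2: "r^2 = tt^2 - 1" using t1 by (simp add: r_def)
  have r0: "0 < r" using t1 by (simp add: r_def)
  have rt: "r < tt"
  proof -
    have "r^2 < tt^2" using r2 by simp
    thus ?thesis using t1 by (smt (verit) power_mono r0)
  qed
  have b: "snd h \<noteq> 0"
  proof
    assume "snd h = 0"
    hence "(Re (fst h))^2 + (Im (fst h))^2 - 1 = 0" using su11_Re_Im[OF h] by simp
    moreover have "1 < (Re (fst h))^2" using t1 by (simp add: tt_def)
    ultimately show False by (smt (verit) zero_le_power2)
  qed
  have P1: "cmod xp = 1" "moeb h xp = xp" "fst h - cnj (snd h) * xp = of_real (tt - r)"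
    "cnj (snd h) * xp + cnj (fst h) = of_real (tt + r)"
    using GEN[OF h b, of r xp] r2 rt r0 by (simp_all add: xp_def tt_def)
  have P2: "cmod xm = 1" "moeb h xm = xm" "fst h - cnj (snd h) * xm = of_real (tt + r)"
    "cnj (snd h) * xm + cnj (fst h) = of_real (tt - r)"
    using GEN[OF h b, of "-r" xm] r2 rt r0 by (simp_all add: xm_def tt_def)
  have pm: "xp \<noteq> xm"
  proof
    assume "xp = xm"
    hence "\<i> * of_real (Im (fst h)) + of_real r = \<i> * of_real (Im (fst h)) + of_real (-r)"
      using b by (simp add: xp_def xm_def)
    thus False using r0 by (simp add: complex_eq_iff)
  qed
  define K where "K = (tt - r) / (tt + r)"
  have K0: "0 \<le> K" "K < 1" using rt r0 by (simp_all add: K_def)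
  define R where "R y = (y - xp) / (y - xm)" for y
  have stepR: "R (moeb h z) = of_real K * R z" if z: "z \<in> disk" for z
  proof -
    have z1: "cmod z \<le> 1" using z by (simp add: in_disk)
    have zm: "z - xm \<noteq> 0" using z P2(1) by (auto simp: in_disk)
    have d: "cnj (snd h) * z + cnj (fst h) \<noteq> 0" using den_nz[OF h z1] .
    have a: "moeb h z - xp = of_real (tt - r) * (z - xp) / (cnj (snd h) * z + cnj (fst h))"
      using FIXID[OF h _ P1(2) z1] P1(1,3) by simp
    have c: "moeb h z - xm = of_real (tt + r) * (z - xm) / (cnj (snd h) * z + cnj (fst h))"
      using FIXID[OF h _ P2(2) z1] P2(1,3) by simp
    have tr: "complex_of_real (tt + r) \<noteq> 0" using rt r0 by (simp del: of_real_add)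
    have "R (moeb h z) = (of_real (tt - r) / of_real (tt + r)) * R z"
      unfolding R_def a c frac_ratio[OF d] ..
    thus ?thesis by (simp add: K_def)
  qed
  have iterR: "R ((moeb h ^^ j) z) = of_real K ^ j * R z" if z: "z \<in> disk" for z j
  proof (induction j)
    case 0 thus ?case by simp
  next
    case (Suc j) thus ?case using stepR[OF iter_disk[OF h z, of j]] by simp
  qed
  have inv: "y = (xp - R y * xm) / (1 - R y)" if y: "y \<in> disk" for y
  proof -
    have ym: "y - xm \<noteq> 0" using y P2(1) by (auto simp: in_disk)
    have pm0: "xp - xm \<noteq> 0" using pm by simp
    have e1: "1 - R y = (xp - xm) / (y - xm)" unfolding R_def using ym by (simp add: field_simps)
    have e2: "xp - R y * xm = y * (xp - xm) / (y - xm)" unfolding R_def using ym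
      by (simp add: field_simps)
    show ?thesis unfolding e1 e2 using ym pm0 by simp
  qed
  have conv: "(\<lambda>j. (moeb h ^^ j) z) \<longlonglongrightarrow> xp" if z: "z \<in> disk" for z
  proof -
    have "(\<lambda>j. of_real K ^ j) \<longlonglongrightarrow> (0::complex)"
      using K0 by (intro LIMSEQ_power_zero) simp
    hence Rl: "(\<lambda>j. of_real K ^ j * R z) \<longlonglongrightarrow> 0 * R z" by (intro tendsto_mult tendsto_const)
    have "(\<lambda>j. (xp - (of_real K ^ j * R z) * xm) / (1 - of_real K ^ j * R z)) \<longlonglongrightarrow> (xp - (0 * R z) * xm) / (1 - 0 * R z)"
      by (intro tendsto_intros Rl) simp
    moreover have "(xp - (of_real K ^ j * R z) * xm) / (1 - of_real K ^ j * R z) = (moeb h ^^ j) z" for j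
      using inv[OF iter_disk[OF h z, of j]] iterR[OF z, of j] by simp
    ultimately show ?thesis by simp
  qed
  show ?thesis using P1(1,2) conv by (simp add: nice_def xp_def r_def tt_def)
qed

definition mneg :: "mat \<Rightarrow> mat" where "mneg m = (- fst m, - snd m)"

lemma moeb_mneg: "moeb (mneg m) = moeb m"
proof
  fix z
  have "(- fst m * z + - snd m) / (cnj (- snd m) * z + cnj (- fst m)) = (fst m * z + snd m) / (cnj (snd m) * z + cnj (fst m))"
  proof -
    have "- fst m * z + - snd m = - (fst m * z + snd m)" by simp
    moreover have "cnj (- snd m) * z + cnj (- fst m) = - (cnj (snd m) * z + cnj (fst m))" by simp
    ultimately show ?thesis by (simp only: minus_divide_divide)
  qed
  thus "moeb (mneg m) z = moeb m z" by (simp add: moeb_def mneg_def)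
qed

lemma su11_mneg: "su11 m \<Longrightarrow> su11 (mneg m)" by (simp add: su11_def mneg_def)
lemma minv_mneg: "minv (mneg m) = mneg (minv m)" by (simp add: minv_def mneg_def)
lemma nice_mneg: "nice (mneg h) \<xi> = nice h \<xi>" by (simp add: nice_def moeb_mneg)

lemma H1:
  assumes h: "su11 h" and nid: "\<exists>z\<in>disk. moeb h z \<noteq> z"
    and g: "geodesic_param c (repelling_fp h) (attracting_fp h)"
  shows "nice h (attracting_fp h) \<and> nice (minv h) (repelling_fp h)"
proof -
  define tt where "tt = Re (fst h)"
  have hi: "su11 (minv h)" using su11_minv[OF h] .
  have tinv: "Re (fst (minv h)) = tt" by (simp add: minv_def tt_def)
  have ne: "repelling_fp h \<noteq> attracting_fp h" using geo_ends_ne[OF g] .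
  consider "1 < tt" | "tt < -1" | "\<bar>tt\<bar> < 1" | "tt^2 = 1"
  proof -
    have "1 < tt \<or> tt < -1 \<or> \<bar>tt\<bar> < 1 \<or> tt = 1 \<or> tt = -1" by (simp add: abs_less_iff) linarith
    thus ?thesis using that by auto
  qed
  thus ?thesis
  proof cases
    case 1
    obtain x1 where n1: "nice h x1" using HYP[OF h] 1 by (auto simp: tt_def)
    obtain x2 where n2: "nice (minv h) x2" using HYP[OF hi] 1 tinv by auto
    show ?thesis using n1 n2 nice_att[OF n1] nice_rep[OF n2] by simp
  next
    case 2
    have hn: "su11 (mneg h)" using su11_mneg[OF h] .
    have hni: "su11 (mneg (minv h))" using su11_mneg[OF hi] .
    obtain x1 where n1: "nice (mneg h) x1" using HYP[OF hn] 2 by (auto simp: tt_def mneg_def)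
    obtain x2 where n2: "nice (mneg (minv h)) x2" using HYP[OF hni] 2 tinv by (auto simp: mneg_def)
    have n1': "nice h x1" using n1 nice_mneg by simp
    have n2': "nice (minv h) x2" using n2 nice_mneg by simp
    show ?thesis using n1' n2' nice_att[OF n1'] nice_rep[OF n2'] by simp
  next
    case 3
    have "(\<lambda>\<xi>. cmod \<xi> = 1 \<and> moeb h \<xi> = \<xi> \<and> (\<lambda>n. (moeb h ^^ n) 0) \<longlonglongrightarrow> \<xi>) = (\<lambda>\<xi>. False)"
      using elliptic_no_fixed[OF h] 3 by (auto simp: tt_def)
    hence a: "attracting_fp h = (THE \<xi>::complex. False)" by (simp add: attracting_fp_def)
    have "(\<lambda>\<xi>. cmod \<xi> = 1 \<and> moeb (minv h) \<xi> = \<xi> \<and> (\<lambda>n. (moeb (minv h) ^^ n) 0) \<longlonglongrightarrow> \<xi>) = (\<lambda>\<xi>. False)"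
      using elliptic_no_fixed[OF hi] 3 tinv by auto
    hence b: "repelling_fp h = (THE \<xi>::complex. False)" by (simp add: repelling_fp_def attracting_fp_def)
    show ?thesis using a b ne by simp
  next
    case 4
    show ?thesis
    proof (cases "snd h = 0")
      case True
      have "(cmod (fst h))^2 = 1" using su11_norm[OF h] True by simp
      hence "(Im (fst h))^2 = 0" using 4 cmod_sq[of "fst h"] by (simp add: tt_def)
      hence im: "Im (fst h) = 0" by simp
      have "moeb h z = z" for z
      proof -
        have "cnj (fst h) = fst h" using im by (simp add: complex_eq_iff)
        moreover have "fst h \<noteq> 0" using \<open>(cmod (fst h))^2 = 1\<close> by auto
        ultimately show ?thesis using True by (simp add: moeb_def)
      qed
      thus ?thesis using nid by simp
    next
      case False
      have n1: "nice h ((\<i> * of_real (Im (fst h)) + of_real 0) / cnj (snd h))"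
        using PARA[OF h False] 4 by (simp add: tt_def)
      have n2: "nice (minv h) ((\<i> * of_real (Im (fst (minv h))) + of_real 0) / cnj (snd (minv h)))"
        using PARA[OF hi] False 4 tinv by (simp add: minv_def)
      have e: "(\<i> * of_real (Im (fst (minv h))) + of_real 0) / cnj (snd (minv h)) = (\<i> * of_real (Im (fst h)) + of_real 0) / cnj (snd h)"
        by (simp add: minv_def)
      show ?thesis using nice_att[OF n1] nice_rep[OF n2] e ne by simp
    qed
  qed
qed

lemma moeb_conj:
  assumes k: "su11 k" and h: "su11 h" and w: "cmod w \<le> 1"
  shows "moeb (mmul (mmul k h) (minv k)) w = moeb k (moeb h (moeb (minv k) w))"
proof -
  have ki: "su11 (minv k)" using su11_minv[OF k] .
  have w1: "cmod (moeb (minv k) w) \<le> 1" using moeb_cdisk[OF ki w] .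
  have "moeb (mmul (mmul k h) (minv k)) w = moeb (mmul k h) (moeb (minv k) w)"
    using moeb_mmul[OF su11_mmul[OF k h] ki w] .
  also have "\<dots> = moeb k (moeb h (moeb (minv k) w))" using moeb_mmul[OF k h w1] .
  finally show ?thesis .
qed

lemma CONJ:
  assumes k: "su11 k" and h: "su11 h" and n: "nice h \<xi>"
  shows "nice (mmul (mmul k h) (minv k)) (moeb k \<xi>)"
proof -
  let ?g = "mmul (mmul k h) (minv k)"
  have ki: "su11 (minv k)" using su11_minv[OF k] .
  have x1: "cmod \<xi> = 1" and fx: "moeb h \<xi> = \<xi>" and cv: "\<And>z. z \<in> disk \<Longrightarrow> (\<lambda>j. (moeb h ^^ j) z) \<longlonglongrightarrow> \<xi>"
    using n by (auto simp: nice_def)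
  have c1: "cmod (moeb k \<xi>) = 1" using moeb_circle[OF k x1] .
  have c2: "moeb ?g (moeb k \<xi>) = moeb k \<xi>"
    using moeb_conj[OF k h, of "moeb k \<xi>"] c1 moeb_minv_moeb[OF k, of \<xi>] x1 fx by simp
  have it: "(moeb ?g ^^ j) z = moeb k ((moeb h ^^ j) (moeb (minv k) z))" if z: "z \<in> disk" for z j
  proof (induction j)
    case 0 thus ?case using moeb_moeb_minv[OF k, of z] z by (simp add: in_disk)
  next
    case (Suc j)
    have d: "(moeb h ^^ j) (moeb (minv k) z) \<in> disk" using iter_disk[OF h moeb_disk[OF ki z]] .
    have "(moeb ?g ^^ Suc j) z = moeb ?g (moeb k ((moeb h ^^ j) (moeb (minv k) z)))" using Suc by simp
    also have "\<dots> = moeb k (moeb h ((moeb h ^^ j) (moeb (minv k) z)))"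
      using moeb_conj[OF k h] moeb_minv_moeb[OF k] moeb_cdisk[OF k] d by (simp add: in_disk)
    finally show ?case by simp
  qed
  have c3: "(\<lambda>j. (moeb ?g ^^ j) z) \<longlonglongrightarrow> moeb k \<xi>" if z: "z \<in> disk" for z
  proof -
    have "(\<lambda>j. (moeb h ^^ j) (moeb (minv k) z)) \<longlonglongrightarrow> \<xi>" using cv moeb_disk[OF ki z] by blast
    hence "(\<lambda>j. moeb k ((moeb h ^^ j) (moeb (minv k) z))) \<longlonglongrightarrow> moeb k \<xi>"
      using isCont_tendsto_compose isCont_moeb[OF k] x1 by (metis order_refl)
    thus ?thesis using it[OF z] by simp
  qed
  show ?thesis using c1 c2 c3 by (simp add: nice_def)
qed

lemma minv_conj: "minv (mmul (mmul k h) (minv k)) = mmul (mmul k (minv h)) (minv k)"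
  by (simp add: minv_mmul mmul_assoc)

lemma AXIS:
  assumes n1: "nice h q" and n2: "nice (minv h) p" and g: "geodesic_param c p q"
  shows "axis h = range c"
proof -
  have a: "attracting_fp h = q" using nice_att[OF n1] .
  have r: "repelling_fp h = p" using nice_rep[OF n2] .
  show ?thesis
  proof
    show "axis h \<subseteq> range c"
    proof
      fix z assume "z \<in> axis h"
      then obtain c' where g': "geodesic_param c' p q" and z: "z \<in> range c'" by (auto simp: axis_def a r)
      obtain \<tau> where "\<forall>t. c' t = c (t + \<tau>)" using SHIFT[OF g g'] by blast
      thus "z \<in> range c" using z by auto
    qed
    show "range c \<subseteq> axis h" using g by (auto simp: axis_def a r)
  qed
qed

fun inv_letter :: "letter \<Rightarrow> letter" where
  "inv_letter A = Ainv" | "inv_letter Ainv = A" | "inv_letter B = Binv" | "inv_letter Binv = B"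

lemma inv_inv_letter[simp]: "inv_letter (inv_letter l) = l" by (cases l) auto
lemma inv_letter_neq[simp]: "inv_letter l \<noteq> l" by (cases l) auto

fun red_ok :: "letter list \<Rightarrow> bool" where
  "red_ok [] = True" | "red_ok [x] = True" | "red_ok (x # y # r) = (y \<noteq> inv_letter x \<and> red_ok (y # r))"

lemma red_ok_tl: "red_ok (x # r) \<Longrightarrow> red_ok r"
  by (cases r) auto

fun red :: "letter list \<Rightarrow> letter list" where
  "red [] = []"
| "red (x # w) = (case red w of [] \<Rightarrow> [x] | y # r \<Rightarrow> if y = inv_letter x then r else x # y # r)"

lemma red_ok_red: "red_ok (red w)"
proof (induction w)
  case Nil thus ?case by simp
next
  case (Cons x w)
  show ?case
  proof (cases "red w")
    case Nil thus ?thesis by simp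
  next
    case (Cons y r)
    thus ?thesis using Cons.IH red_ok_tl[of y r] by auto
  qed
qed

definition winv :: "letter list \<Rightarrow> letter list" where
  "winv w = rev (map inv_letter w)"

locale schot =
  fixes a b :: mat
  assumes sch: "schottky a b"
begin

abbreviation lm :: "letter \<Rightarrow> mat" where "lm \<equiv> letter_mat a b"
abbreviation wm :: "letter list \<Rightarrow> mat" where "wm \<equiv> word_mat a b"

lemma hypa: "hyperbolic_type a" and hypb: "hyperbolic_type b"
  using sch by (auto simp: schottky_def)

lemma su11_lm: "su11 (lm l)"
  using hypa hypb by (cases l) (auto simp: letter_mat_def hyperbolic_type_def su11_minv)

lemma Re_lm: "1 < \<bar>Re (fst (lm l))\<bar>"
  using hypa hypb by (cases l) (auto simp: letter_mat_def hyperbolic_type_def minv_def)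

lemma lm_inv: "lm (inv_letter l) = minv (lm l)"
  by (cases l) (auto simp: letter_mat_def)

lemma wm_Nil[simp]: "wm [] = mid" by (simp add: word_mat_def)
lemma wm_Cons: "wm (l # w) = mmul (lm l) (wm w)" by (simp add: word_mat_def)
lemma wm_append: "wm (u @ v) = mmul (wm u) (wm v)"
  by (induction u) (simp_all add: wm_Cons mmul_assoc)
lemma wm_single: "wm [l] = lm l" by (simp add: wm_Cons)

lemma su11_wm: "su11 (wm w)"
  by (induction w) (simp_all add: wm_Cons su11_mid su11_mmul su11_lm)

lemma wm_winv: "wm (winv w) = minv (wm w)"
  by (induction w) (simp_all add: winv_def wm_append wm_single wm_Cons lm_inv minv_mmul)

lemma wm_red: "wm (red w) = wm w"
proof (induction w)
  case Nil thus ?case by simp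
next
  case (Cons x w)
  show ?case
  proof (cases "red w")
    case Nil thus ?thesis using Cons.IH by (simp add: wm_Cons)
  next
    case (Cons y r)
    show ?thesis
    proof (cases "y = inv_letter x")
      case True
      have "wm (x # w) = mmul (lm x) (mmul (lm y) (wm r))" using Cons.IH Cons by (simp add: wm_Cons)
      also have "\<dots> = wm r" using True by (simp add: lm_inv mmul_assoc[symmetric] mmul_minv su11_lm)
      finally show ?thesis using True Cons by simp
    next
      case False thus ?thesis using Cons.IH Cons by (simp add: wm_Cons)
    qed
  qed
qed

lemma Gamma_wm: "wm w \<in> Gamma a b" by (auto simp: Gamma_def)
lemma Gamma_E: "x \<in> Gamma a b \<Longrightarrow> \<exists>w. x = wm w" by (auto simp: Gamma_def)
lemma Gamma_mid: "mid \<in> Gamma a b" using Gamma_wm[of "[]"] by simp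
lemma Gamma_lm: "lm l \<in> Gamma a b" using Gamma_wm[of "[l]"] by (simp add: wm_single)
lemma Gamma_mmul: "x \<in> Gamma a b \<Longrightarrow> y \<in> Gamma a b \<Longrightarrow> mmul x y \<in> Gamma a b"
  by (metis Gamma_E Gamma_wm wm_append)
lemma Gamma_minv: "x \<in> Gamma a b \<Longrightarrow> minv x \<in> Gamma a b"
  by (metis Gamma_E Gamma_wm wm_winv)
lemma Gamma_su11: "x \<in> Gamma a b \<Longrightarrow> su11 x"
  using Gamma_E su11_wm by blast

definition cen :: "letter \<Rightarrow> complex" where "cen l = moeb (lm l) 0"
definition Dc :: "letter \<Rightarrow> complex set" where "Dc l = {z \<in> disk. Qf z (cen l) \<le> Qf z 0}"
definition Ds :: "letter \<Rightarrow> complex set" where "Ds l = {z \<in> disk. Qf z (cen l) < Qf z 0}"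
definition PP :: "complex set" where "PP = {z \<in> disk. \<forall>l. z \<notin> Ds l}"

lemma cen_disk: "cen l \<in> disk" by (simp add: cen_def moeb_disk su11_lm)

end

lemma Qf_zero: "y \<in> disk \<Longrightarrow> Qf y 0 = 2 / (1 - (cmod y)^2) - 1"
  using disk_pos[of y] by (simp add: Qf_def field_simps)

lemma Qdiff:
  assumes m: "su11 m" and z: "z \<in> disk"
  shows "Qf z (moeb m 0) - Qf z 0 = 2 * ((cmod (cnj (snd m) * z - fst m))^2 - 1) / (1 - (cmod z)^2)"
proof -
  have mi: "su11 (minv m)" using su11_minv[OF m] .
  have z1: "cmod z \<le> 1" using z by (simp add: in_disk)
  define y where "y = moeb (minv m) z"
  have yd: "y \<in> disk" using moeb_disk[OF mi z] by (simp add: y_def)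
  have "Qf z (moeb m 0) = Qf y (moeb (minv m) (moeb m 0))"
    using Qf_moeb[OF mi z moeb_disk[OF m zero_disk]] by (simp add: y_def)
  also have "moeb (minv m) (moeb m 0) = 0" using moeb_minv_moeb[OF m] by simp
  finally have q1: "Qf z (moeb m 0) = Qf y 0" .
  define d where "d = cnj (snd (minv m)) * z + cnj (fst (minv m))"
  have dd: "d = - (cnj (snd m) * z - fst m)" by (simp add: d_def minv_def)
  have dn: "cmod d \<noteq> 0" using den_nz[OF mi z1] by (simp add: d_def)
  have oy: "1 - (cmod y)^2 = (1 - (cmod z)^2) / (cmod d)^2"
    using one_minus_moeb[OF mi z1] by (simp add: y_def d_def)
  have pz: "0 < 1 - (cmod z)^2" using disk_pos[OF z] .
  have "Qf y 0 = 2 * (cmod d)^2 / (1 - (cmod z)^2) - 1"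
    using Qf_zero[OF yd] oy dn pz by (simp add: field_simps)
  moreover have "Qf z 0 = 2 / (1 - (cmod z)^2) - 1" using Qf_zero[OF z] .
  moreover have "cmod d = cmod (cnj (snd m) * z - fst m)" using dd by (simp add: norm_minus_commute)
  ultimately show ?thesis using q1 pz by (simp add: field_simps)
qed

context schot begin

lemma Dc_iff: "z \<in> Dc l \<longleftrightarrow> z \<in> disk \<and> cmod (cnj (snd (lm l)) * z - fst (lm l)) \<le> 1"
proof (cases "z \<in> disk")
  case True
  have e: "Qf z (cen l) - Qf z 0 = 2 * ((cmod (cnj (snd (lm l)) * z - fst (lm l)))^2 - 1) / (1 - (cmod z)^2)"
    using Qdiff[OF su11_lm True] by (simp add: cen_def)
  have pz: "0 < 1 - (cmod z)^2" using disk_pos[OF True] .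
  have "Qf z (cen l) \<le> Qf z 0 \<longleftrightarrow> (cmod (cnj (snd (lm l)) * z - fst (lm l)))^2 \<le> 1"
  proof -
    have "Qf z (cen l) \<le> Qf z 0 \<longleftrightarrow> Qf z (cen l) - Qf z 0 \<le> 0" by simp
    also have "\<dots> \<longleftrightarrow> 2 * ((cmod (cnj (snd (lm l)) * z - fst (lm l)))^2 - 1) / (1 - (cmod z)^2) \<le> 0" using e by simp
    also have "\<dots> \<longleftrightarrow> (cmod (cnj (snd (lm l)) * z - fst (lm l)))^2 \<le> 1" using pz by (simp add: divide_le_0_iff)
    finally show ?thesis .
  qed
  also have "\<dots> \<longleftrightarrow> cmod (cnj (snd (lm l)) * z - fst (lm l)) \<le> 1" by (simp add: power_le_one_iff)
  finally show ?thesis using True by (simp add: Dc_def)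
qed (simp add: Dc_def)

lemma Ds_iff: "z \<in> Ds l \<longleftrightarrow> z \<in> disk \<and> cmod (cnj (snd (lm l)) * z - fst (lm l)) < 1"
proof (cases "z \<in> disk")
  case True
  have e: "Qf z (cen l) - Qf z 0 = 2 * ((cmod (cnj (snd (lm l)) * z - fst (lm l)))^2 - 1) / (1 - (cmod z)^2)"
    using Qdiff[OF su11_lm True] by (simp add: cen_def)
  have pz: "0 < 1 - (cmod z)^2" using disk_pos[OF True] .
  have "Qf z (cen l) < Qf z 0 \<longleftrightarrow> (cmod (cnj (snd (lm l)) * z - fst (lm l)))^2 < 1"
  proof -
    have "Qf z (cen l) < Qf z 0 \<longleftrightarrow> Qf z (cen l) - Qf z 0 < 0" by simp
    also have "\<dots> \<longleftrightarrow> 2 * ((cmod (cnj (snd (lm l)) * z - fst (lm l)))^2 - 1) / (1 - (cmod z)^2) < 0" using e by simp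
    also have "\<dots> \<longleftrightarrow> (cmod (cnj (snd (lm l)) * z - fst (lm l)))^2 < 1" using pz by (simp add: divide_less_0_iff)
    finally show ?thesis .
  qed
  also have "\<dots> \<longleftrightarrow> cmod (cnj (snd (lm l)) * z - fst (lm l)) < 1" by (simp add: power_less_one_iff)
  finally show ?thesis using True by (simp add: Ds_def)
qed (simp add: Ds_def)

lemma Ds_sub_Dc: "Ds l \<subseteq> Dc l" by (auto simp: Ds_def Dc_def)

lemma Dhalf_lm: "Dhalf (lm l) = Dc l"
  unfolding Dhalf_def Dc_def using hdist_le_iff cen_disk by (auto simp: cen_def)

lemma interior_Dhalf: "interior (Dhalf (lm l)) = Ds l"
proof
  let ?be = "cnj (snd (lm l))" and ?al = "fst (lm l)"
  show "Ds l \<subseteq> interior (Dhalf (lm l))"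
  proof (rule interior_maximal)
    show "Ds l \<subseteq> Dhalf (lm l)" using Ds_sub_Dc Dhalf_lm by simp
    have "Ds l = disk \<inter> {z. cmod (?be * z - ?al) < 1}" using Ds_iff by auto
    moreover have "open {z. cmod (?be * z - ?al) < 1}"
      by (intro open_Collect_less continuous_intros)
    ultimately show "open (Ds l)" by (simp add: open_Int disk_def)
  qed
  show "interior (Dhalf (lm l)) \<subseteq> Ds l"
  proof
    fix z assume zi: "z \<in> interior (Dhalf (lm l))"
    then obtain e where e: "0 < e" "ball z e \<subseteq> Dhalf (lm l)" using mem_interior by blast
    have zD: "z \<in> Dc l" using zi interior_subset Dhalf_lm by blast
    hence zd: "z \<in> disk" and le: "cmod (?be * z - ?al) \<le> 1" using Dc_iff by auto
    show "z \<in> Ds l"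
    proof (rule ccontr)
      assume "z \<notin> Ds l"
      hence eq: "cmod (?be * z - ?al) = 1" using le zd Ds_iff by auto
      have bnz: "?be \<noteq> 0"
      proof
        assume "?be = 0"
        hence "cmod ?al = 1" using eq by simp
        moreover have "(cmod ?al)^2 = 1 + (cmod (snd (lm l)))^2" using su11_norm[OF su11_lm] .
        moreover have "cmod (snd (lm l)) = 0" using \<open>?be = 0\<close> by simp
        ultimately have "True" by simp
        have "\<bar>Re ?al\<bar> \<le> cmod ?al" by (rule abs_Re_le_cmod)
        thus False using Re_lm[of l] \<open>cmod ?al = 1\<close> by simp
      qed
      define v where "v = z - ?al / ?be"
      have v0: "v \<noteq> 0" using eq bnz by (auto simp: v_def field_simps)
      define \<epsilon> where "\<epsilon> = e / (2 * cmod v)"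
      have ep: "0 < \<epsilon>" using e v0 by (simp add: \<epsilon>_def)
      define z' where "z' = z + of_real \<epsilon> * v"
      have "dist z z' = \<epsilon> * cmod v" using ep by (simp add: z'_def dist_norm norm_mult)
      also have "\<dots> < e" using e v0 by (simp add: \<epsilon>_def)
      finally have "z' \<in> ball z e" by simp
      hence "z' \<in> Dc l" using e Dhalf_lm by blast
      hence "cmod (?be * z' - ?al) \<le> 1" using Dc_iff by blast
      moreover have "?be * z' - ?al = (1 + of_real \<epsilon>) * (?be * z - ?al)"
        using bnz by (simp add: z'_def v_def field_simps)
      moreover have "cmod ((1 + of_real \<epsilon>) * (?be * z - ?al)) = 1 + \<epsilon>"
        using eq ep by (simp add: norm_mult) (smt (verit) norm_of_real of_real_1 of_real_add)
      ultimately show False using ep by simp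
    qed
  qed
qed

lemma fundom_PP: "fundom a b = PP"
proof -
  have "fundom a b = (\<Inter>l\<in>{A, Ainv, B, Binv}. disk - interior (Dhalf (lm l)))"
    by (simp add: fundom_def letter_mat_def)
  also have "\<dots> = (\<Inter>l\<in>{A, Ainv, B, Binv}. disk - Ds l)" by (simp add: interior_Dhalf)
  also have "\<dots> = PP"
  proof -
    have U: "{A, Ainv, B, Binv} = UNIV" by (auto, case_tac x, auto)
    show ?thesis unfolding U by (auto simp: PP_def)
  qed
  finally show ?thesis .
qed


lemma Dc_inv_disj: "Dc l \<inter> Dc (inv_letter l) = {}"
proof (rule ccontr)
  assume "Dc l \<inter> Dc (inv_letter l) \<noteq> {}"
  then obtain z where z1: "z \<in> Dc l" and z2: "z \<in> Dc (inv_letter l)" by blast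
  let ?al = "fst (lm l)" and ?be = "snd (lm l)"
  have n1: "cmod (cnj ?be * z - ?al) \<le> 1" using z1 Dc_iff by blast
  have n2: "cmod (cnj ?be * z + cnj ?al) \<le> 1"
  proof -
    have "cmod (cnj (snd (lm (inv_letter l))) * z - fst (lm (inv_letter l))) \<le> 1" using z2 Dc_iff by blast
    moreover have "cnj (snd (lm (inv_letter l))) * z - fst (lm (inv_letter l)) = - (cnj ?be * z + cnj ?al)"
      by (simp add: lm_inv minv_def)
    ultimately show ?thesis by (simp only: norm_minus_cancel)
  qed
  have "cmod (?al + cnj ?al) \<le> 2"
  proof -
    have "?al + cnj ?al = (cnj ?be * z + cnj ?al) - (cnj ?be * z - ?al)" by simp
    hence "cmod (?al + cnj ?al) \<le> cmod (cnj ?be * z + cnj ?al) + cmod (cnj ?be * z - ?al)"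
      by (metis norm_triangle_ineq4)
    thus ?thesis using n1 n2 by simp
  qed
  moreover have "?al + cnj ?al = of_real (2 * Re ?al)" by (simp add: complex_eq_iff)
  ultimately have "\<bar>2 * Re ?al\<bar> \<le> 2" by simp
  thus False using Re_lm[of l] by simp
qed

lemma Dc_disj: "l \<noteq> l' \<Longrightarrow> Dc l \<inter> Dc l' = {}"
proof -
  assume ne: "l \<noteq> l'"
  have s: "(Dc A \<union> Dc Ainv) \<inter> (Dc B \<union> Dc Binv) = {}"
    using sch Dhalf_lm[of A] Dhalf_lm[of Ainv] Dhalf_lm[of B] Dhalf_lm[of Binv]
    by (simp add: schottky_def letter_mat_def)
  show ?thesis
  proof (cases "l' = inv_letter l")
    case True thus ?thesis using Dc_inv_disj by simp
  next
    case False
    have s1: "Dc A \<inter> Dc B = {}" and s2: "Dc A \<inter> Dc Binv = {}" and s3: "Dc Ainv \<inter> Dc B = {}"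
      and s4: "Dc Ainv \<inter> Dc Binv = {}" using s by blast+
    show ?thesis using ne False by (cases l; cases l'; simp add: s1 s2 s3 s4 Int_commute)
  qed
qed

lemma Qf_lm_shift:
  assumes z: "z \<in> disk"
  shows "Qf (moeb (lm l) z) (cen l) = Qf z 0" "Qf (moeb (lm l) z) 0 = Qf z (cen (inv_letter l))"
proof -
  have m: "su11 (lm l)" by (rule su11_lm)
  show "Qf (moeb (lm l) z) (cen l) = Qf z 0" using Qf_moeb[OF m z zero_disk] by (simp add: cen_def)
  have "moeb (lm l) (cen (inv_letter l)) = 0"
    using moeb_moeb_minv[OF m, of 0] by (simp add: cen_def lm_inv)
  moreover have "Qf (moeb (lm l) z) (moeb (lm l) (cen (inv_letter l))) = Qf z (cen (inv_letter l))"
    using Qf_moeb[OF m z cen_disk] .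
  ultimately show "Qf (moeb (lm l) z) 0 = Qf z (cen (inv_letter l))" by simp
qed

lemma pp_Dc: "z \<in> disk \<Longrightarrow> moeb (lm l) z \<in> Dc l \<longleftrightarrow> z \<notin> Ds (inv_letter l)"
  using Qf_lm_shift[of z l] moeb_disk[OF su11_lm] by (auto simp: Dc_def Ds_def)

lemma pp_Ds: "z \<in> disk \<Longrightarrow> moeb (lm l) z \<in> Ds l \<longleftrightarrow> z \<notin> Dc (inv_letter l)"
  using Qf_lm_shift[of z l] moeb_disk[OF su11_lm] by (auto simp: Dc_def Ds_def)

lemma PP_disk: "PP \<subseteq> disk" by (auto simp: PP_def)

lemma zero_notin_Dc: "0 \<notin> Dc l"
proof
  assume "0 \<in> Dc l"
  hence "cmod (fst (lm l)) \<le> 1" using Dc_iff by simp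
  moreover have "\<bar>Re (fst (lm l))\<bar> \<le> cmod (fst (lm l))" by (rule abs_Re_le_cmod)
  ultimately show False using Re_lm[of l] by simp
qed

lemma zero_PP: "0 \<in> PP" using zero_notin_Dc Ds_sub_Dc by (auto simp: PP_def)

lemma wm_moeb_Cons: "z \<in> disk \<Longrightarrow> moeb (wm (l # r)) z = moeb (lm l) (moeb (wm r) z)"
  by (simp add: wm_Cons moeb_mmul su11_lm su11_wm in_disk)

lemma wm_disk: "z \<in> disk \<Longrightarrow> moeb (wm r) z \<in> disk" by (simp add: moeb_disk su11_wm)

lemma PPword:
  assumes "red_ok (l # r)" "z \<in> PP"
  shows "moeb (wm (l # r)) z \<in> Dc l \<and> (r \<noteq> [] \<longrightarrow> moeb (wm (l # r)) z \<in> Ds l)"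
  using assms
proof (induction r arbitrary: l)
  case Nil
  have zd: "z \<in> disk" using Nil.prems PP_disk by blast
  have "z \<notin> Ds (inv_letter l)" using Nil.prems by (simp add: PP_def)
  hence "moeb (lm l) z \<in> Dc l" using pp_Dc[OF zd] by simp
  thus ?case by (simp add: wm_single)
next
  case (Cons l' r)
  have zd: "z \<in> disk" using Cons.prems PP_disk by blast
  have ne: "l' \<noteq> inv_letter l" and ro: "red_ok (l' # r)" using Cons.prems by auto
  have "moeb (wm (l' # r)) z \<in> Dc l'" using Cons.IH[OF ro Cons.prems(2)] by simp
  hence "moeb (wm (l' # r)) z \<notin> Dc (inv_letter l)" using Dc_disj[of l' "inv_letter l"] ne by auto
  hence "moeb (lm l) (moeb (wm (l' # r)) z) \<in> Ds l" using pp_Ds wm_disk[OF zd] by blast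
  hence "moeb (wm (l # l' # r)) z \<in> Ds l" using wm_moeb_Cons[OF zd] by simp
  thus ?case using Ds_sub_Dc by auto
qed

lemma FREE: "red_ok w \<Longrightarrow> w \<noteq> [] \<Longrightarrow> moeb (wm w) 0 \<noteq> 0"
proof -
  assume r: "red_ok w" and ne: "w \<noteq> []"
  then obtain l u where w: "w = l # u" by (cases w) auto
  have "moeb (wm w) 0 \<in> Dc l" using PPword[OF r[unfolded w] zero_PP] w by simp
  thus ?thesis using zero_notin_Dc by auto
qed

lemma FREE_mid: "red_ok w \<Longrightarrow> w \<noteq> [] \<Longrightarrow> wm w \<noteq> mid"
  using FREE by fastforce

definition bis :: "letter \<Rightarrow> complex set" where "bis l = Dc l - Ds l"

lemma bis_PP: "bis l \<subseteq> PP"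
proof
  fix z assume z: "z \<in> bis l"
  hence zc: "z \<in> Dc l" and zs: "z \<notin> Ds l" and zd: "z \<in> disk" by (auto simp: bis_def Dc_def)
  have "z \<notin> Ds l'" for l'
  proof (cases "l' = l")
    case True thus ?thesis using zs by simp
  next
    case False thus ?thesis using Dc_disj[of l l'] zc Ds_sub_Dc by auto
  qed
  thus "z \<in> PP" using zd by (simp add: PP_def)
qed

lemma tile_PP: "tile a b x = moeb x ` PP" by (simp add: tile_def fundom_PP)

lemma PP_tile_lm: "PP \<inter> moeb (lm l) ` PP \<subseteq> bis l"
proof
  fix y assume "y \<in> PP \<inter> moeb (lm l) ` PP"
  then obtain z where y: "y \<in> PP" "y = moeb (lm l) z" and z: "z \<in> PP" by blast
  have "moeb (wm [l]) z \<in> Dc l" using PPword[of l "[]" z] z by simp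
  hence "y \<in> Dc l" using y by (simp add: wm_single)
  moreover have "y \<notin> Ds l" using y by (simp add: PP_def)
  ultimately show "y \<in> bis l" by (simp add: bis_def)
qed

lemma bis_tile_lm: "bis l \<subseteq> moeb (lm l) ` PP"
proof
  fix y assume y: "y \<in> bis l"
  have yd: "y \<in> disk" using y by (auto simp: bis_def Dc_def)
  define z where "z = moeb (minv (lm l)) y"
  have zd: "z \<in> disk" using moeb_disk[OF su11_minv[OF su11_lm] yd] by (simp add: z_def)
  have yz: "y = moeb (lm l) z" using moeb_moeb_minv[OF su11_lm, of y] yd by (simp add: z_def in_disk)
  have "z \<notin> Ds (inv_letter l)" using pp_Dc[OF zd] y yz by (simp add: bis_def)
  moreover have "z \<in> Dc (inv_letter l)" using pp_Ds[OF zd] y yz by (simp add: bis_def)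
  ultimately have "z \<notin> Ds l'" for l'
    using Dc_disj[of "inv_letter l" l'] Ds_sub_Dc by (cases "l' = inv_letter l") auto
  hence "z \<in> PP" using zd by (simp add: PP_def)
  thus "y \<in> moeb (lm l) ` PP" using yz by blast
qed

lemma PP_tile_long:
  assumes "red_ok w" "2 \<le> length w"
  shows "PP \<inter> moeb (wm w) ` PP = {}"
proof -
  obtain l l' r where w: "w = l # l' # r" using assms(2) by (cases w; cases "tl w") auto
  show ?thesis
  proof (rule ccontr)
    assume "PP \<inter> moeb (wm w) ` PP \<noteq> {}"
    then obtain z where z: "z \<in> PP" "moeb (wm w) z \<in> PP" by blast
    have "moeb (wm w) z \<in> Ds l" using PPword[of l "l' # r" z] assms(1) z(1) w by simp
    thus False using z(2) by (simp add: PP_def)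
  qed
qed

lemma moeb_inj_disk: "su11 x \<Longrightarrow> z \<in> disk \<Longrightarrow> w \<in> disk \<Longrightarrow> moeb x z = moeb x w \<Longrightarrow> z = w"
  by (metis moeb_minv_moeb in_disk less_imp_le)

lemma tile_mmul: "su11 x \<Longrightarrow> su11 y \<Longrightarrow> tile a b (mmul x y) = moeb x ` tile a b y"
proof -
  assume x: "su11 x" and y: "su11 y"
  have "moeb (mmul x y) ` PP = (moeb x \<circ> moeb y) ` PP"
  proof (rule image_cong)
    fix z assume "z \<in> PP"
    hence "cmod z \<le> 1" using PP_disk by (auto simp: in_disk)
    thus "moeb (mmul x y) z = (moeb x \<circ> moeb y) z" using moeb_mmul[OF x y] by simp
  qed simp
  thus ?thesis unfolding tile_PP by (simp add: image_comp)
qed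

lemma TT:
  assumes x: "x \<in> Gamma a b" and y: "y \<in> Gamma a b"
  shows "y = x \<or> tile a b x \<inter> tile a b y = {} \<or>
         (\<exists>l. y = mmul x (lm l) \<and> tile a b x \<inter> tile a b y \<subseteq> moeb x ` bis l)"
proof -
  obtain wx where wx: "x = wm wx" using Gamma_E[OF x] by blast
  obtain wy where wy: "y = wm wy" using Gamma_E[OF y] by blast
  define r where "r = red (winv wx @ wy)"
  have sx: "su11 x" using su11_wm wx by simp
  have wr: "wm r = mmul (minv x) y" by (simp add: r_def wm_red wm_append wm_winv wx wy)
  have ro: "red_ok r" by (simp add: r_def red_ok_red)
  have yx: "y = mmul x (wm r)" using wr sx by (simp add: mmul_assoc[symmetric] mmul_minv)
  have inter: "tile a b x \<inter> tile a b y = moeb x ` (PP \<inter> moeb (wm r) ` PP)"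
  proof -
    have "tile a b y = moeb x ` (moeb (wm r) ` PP)" using tile_mmul[OF sx su11_wm] yx by (simp add: tile_PP)
    moreover have "inj_on (moeb x) disk" using moeb_inj_disk[OF sx] by (meson inj_onI)
    moreover have "moeb (wm r) ` PP \<subseteq> disk" using wm_disk PP_disk by blast
    ultimately show ?thesis using PP_disk by (simp add: tile_PP inj_on_image_Int)
  qed
  consider "r = []" | l where "r = [l]" | "2 \<le> length r" by (cases r; cases "tl r") auto
  thus ?thesis
  proof cases
    case 1 thus ?thesis using yx by simp
  next
    case 2
    have "tile a b x \<inter> tile a b y \<subseteq> moeb x ` bis l"
      using inter PP_tile_lm[of l] 2 by (auto simp: wm_single)
    thus ?thesis using yx 2 by (auto simp: wm_single)
  next
    case 3 thus ?thesis using inter PP_tile_long[OF ro] by simp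
  qed
qed

end

lemma int_interval_aux:
  fixes f :: "int \<Rightarrow> real"
  shows "f i \<le> t \<Longrightarrow> t < f (i + int d) \<Longrightarrow> \<exists>k. f k \<le> t \<and> t < f (k + 1)"
proof (induction d arbitrary: i)
  case 0 thus ?case by simp
next
  case (Suc d)
  show ?case
  proof (cases "t < f (i + 1)")
    case True thus ?thesis using Suc.prems by blast
  next
    case False
    hence "f (i + 1) \<le> t" by simp
    moreover have "t < f ((i + 1) + int d)" using Suc.prems(2) by (simp add: add.assoc)
    ultimately show ?thesis using Suc.IH by blast
  qed
qed

lemma int_interval:
  fixes f :: "int \<Rightarrow> real"
  assumes "f i \<le> t" "t < f j" "i \<le> j"
  shows "\<exists>k. f k \<le> t \<and> t < f (k + 1)"
  using int_interval_aux[of f i t "nat (j - i)"] assms by simp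

locale cod = schot +
  fixes h :: mat and c :: "real \<Rightarrow> complex" and p q :: complex
    and s :: "int \<Rightarrow> real" and G :: "int \<Rightarrow> mat" and e :: "int \<Rightarrow> letter"
  assumes hG: "h \<in> Gamma a b" and hnid: "h \<noteq> mid"
    and geo: "geodesic_param c p q" and nq: "nice h q" and np: "nice (minv h) p"
    and smono: "strict_mono s" and stop: "filterlim s at_top at_top" and sbot: "filterlim s at_bot at_bot"
    and G0: "G 0 = mid" and Gs: "\<And>k. G (k + 1) = mmul (G k) (lm (e k))"
    and Gt: "\<And>k. c ` {s k .. s (k + 1)} \<subseteq> tile a b (G k)"
begin

lemma G_Gamma: "G k \<in> Gamma a b"
proof (induction k rule: int_induct[where k=0])
  case base thus ?case using G0 Gamma_mid by simp
next
  case (step1 i) thus ?case using Gs Gamma_mmul Gamma_lm by simp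
next
  case (step2 i)
  have "G i = mmul (G (i - 1)) (lm (e (i - 1)))" using Gs[of "i - 1"] by simp
  hence "G (i - 1) = mmul (G i) (minv (lm (e (i - 1))))"
    by (simp add: mmul_assoc mmul_minv su11_lm)
  thus ?case using step2 Gamma_mmul Gamma_minv Gamma_lm by simp
qed

lemma su11_G: "su11 (G k)" using G_Gamma Gamma_su11 by blast

lemma cdisk: "c t \<in> disk" using geo by (simp add: geodesic_param_def)

lemma s_le: "i \<le> j \<Longrightarrow> s i \<le> s j" using smono by (simp add: strict_mono_less_eq)
lemma s_less: "i < j \<Longrightarrow> s i < s j" using smono by (simp add: strict_mono_less)

lemma cover: "\<exists>k. s k \<le> t \<and> t < s (k + 1)"
proof -
  have "\<forall>\<^sub>F k in at_bot. s k \<le> t" using sbot by (simp add: filterlim_at_bot)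
  then obtain i where i: "s i \<le> t" by (meson eventually_False_sequentially eventually_at_bot_linorder order_refl)
  have "\<forall>\<^sub>F k in at_top. t < s k" using stop by (simp add: filterlim_at_top_dense)
  then obtain j0 where j0: "\<And>k. k \<ge> j0 \<Longrightarrow> t < s k" by (auto simp: eventually_at_top_linorder)
  define j where "j = max i j0"
  have "t < s j" using j0 by (simp add: j_def)
  thus ?thesis using int_interval[of s i t j] i by (simp add: j_def)
qed

lemma Gt': "s k \<le> t \<Longrightarrow> t \<le> s (k + 1) \<Longrightarrow> c t \<in> tile a b (G k)"
  using Gt[of k] by auto

definition cy :: "mat \<Rightarrow> real \<Rightarrow> complex" where "cy y t = moeb (minv y) (c t)"

lemma cy_geo: "y \<in> Gamma a b \<Longrightarrow> geodesic_param (cy y) (moeb (minv y) p) (moeb (minv y) q)"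
  unfolding cy_def by (rule geo_moeb[OF geo su11_minv[OF Gamma_su11]])

lemma cy_disk: "y \<in> Gamma a b \<Longrightarrow> cy y t \<in> disk"
  unfolding cy_def using moeb_disk[OF su11_minv[OF Gamma_su11] cdisk] by blast

lemma c_cy: "y \<in> Gamma a b \<Longrightarrow> c t = moeb y (cy y t)"
  unfolding cy_def using moeb_moeb_minv[OF Gamma_su11 , of y "c t"] cdisk by (simp add: in_disk less_imp_le)

lemma mem_img: assumes y: "y \<in> Gamma a b" and S: "S \<subseteq> disk"
  shows "c t \<in> moeb y ` S \<longleftrightarrow> cy y t \<in> S"
proof
  assume "c t \<in> moeb y ` S"
  then obtain z where z: "z \<in> S" "c t = moeb y z" by blast
  have "cy y t = z" unfolding cy_def z(2) using moeb_minv_moeb[OF Gamma_su11[OF y]] z(1) S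
    by (auto simp: in_disk)
  thus "cy y t \<in> S" using z by simp
next
  assume "cy y t \<in> S" thus "c t \<in> moeb y ` S" using c_cy[OF y] by blast
qed

lemma bis_disk: "bis l \<subseteq> disk" by (auto simp: bis_def Dc_def)

lemma mem_tile: "y \<in> Gamma a b \<Longrightarrow> c t \<in> tile a b y \<longleftrightarrow> cy y t \<in> PP"
  unfolding tile_PP using mem_img PP_disk by blast

lemma mem_bis: "y \<in> Gamma a b \<Longrightarrow> c t \<in> moeb y ` bis l \<longleftrightarrow> cy y t \<in> bis l"
  using mem_img bis_disk by blast

definition psi :: "mat \<Rightarrow> letter \<Rightarrow> real \<Rightarrow> real" where
  "psi y l t = Qf (cy y t) (cen l) - Qf (cy y t) 0"

lemma psi_form: "y \<in> Gamma a b \<Longrightarrow> \<exists>A1 B1. \<forall>t. psi y l t = A1 * exp t + B1 * exp (-t)"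
  unfolding psi_def using PSI[OF cy_geo cen_disk zero_disk] by blast

lemma PP_psi: "y \<in> Gamma a b \<Longrightarrow> cy y t \<in> PP \<longleftrightarrow> (\<forall>l. 0 \<le> psi y l t)"
  using cy_disk by (auto simp: PP_def Ds_def psi_def not_less)

lemma bis_psi: "y \<in> Gamma a b \<Longrightarrow> cy y t \<in> bis l \<longleftrightarrow> psi y l t = 0"
  using cy_disk by (auto simp: bis_def Ds_def Dc_def psi_def)

lemma tile_psi: "y \<in> Gamma a b \<Longrightarrow> c t \<in> tile a b y \<longleftrightarrow> (\<forall>l. 0 \<le> psi y l t)"
  by (simp add: mem_tile PP_psi)

lemma bis_psi': "y \<in> Gamma a b \<Longrightarrow> c t \<in> moeb y ` bis l \<longleftrightarrow> psi y l t = 0"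
  by (simp add: mem_bis bis_psi)

lemma CONV:
  assumes y: "y \<in> Gamma a b" and t: "t1 \<le> t" "t \<le> t2" and c1: "c t1 \<in> tile a b y" and c2: "c t2 \<in> tile a b y"
  shows "c t \<in> tile a b y"
proof -
  have "0 \<le> psi y l t" for l
  proof -
    obtain A1 B1 where f: "\<And>t. psi y l t = A1 * exp t + B1 * exp (-t)" using psi_form[OF y] by blast
    have "0 \<le> psi y l t1" using c1 tile_psi[OF y] by simp
    moreover have "0 \<le> psi y l t2" using c2 tile_psi[OF y] by simp
    ultimately show ?thesis using LIN_a[OF t, of A1 B1] f by simp
  qed
  thus ?thesis using tile_psi[OF y] by simp
qed

lemma LINE_ALL:
  assumes y: "y \<in> Gamma a b" and ne: "t1 \<noteq> t2" and c1: "c t1 \<in> moeb y ` bis l" and c2: "c t2 \<in> moeb y ` bis l"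
  shows "c t \<in> moeb y ` bis l"
proof -
  obtain A1 B1 where f: "\<And>t. psi y l t = A1 * exp t + B1 * exp (-t)" using psi_form[OF y] by blast
  have "psi y l t1 = 0" using c1 bis_psi'[OF y] by simp
  moreover have "psi y l t2 = 0" using c2 bis_psi'[OF y] by simp
  ultimately have "A1 = 0 \<and> B1 = 0" using LIN_c[OF ne, of A1 B1] f by simp
  hence "psi y l t = 0" using f by simp
  thus ?thesis using bis_psi'[OF y] by simp
qed

lemma LINE_INT:
  assumes y: "y \<in> Gamma a b" and t: "t1 < t" "t < t2" and c1: "c t1 \<in> tile a b y" and c2: "c t2 \<in> tile a b y"
    and ct: "c t \<in> moeb y ` bis l"
  shows "c t' \<in> moeb y ` bis l"
proof -
  obtain A1 B1 where f: "\<And>t. psi y l t = A1 * exp t + B1 * exp (-t)" using psi_form[OF y] by blast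
  have "0 \<le> psi y l t1" using c1 tile_psi[OF y] by simp
  moreover have "0 \<le> psi y l t2" using c2 tile_psi[OF y] by simp
  moreover have "psi y l t = 0" using ct bis_psi'[OF y] by simp
  ultimately have "A1 = 0 \<and> B1 = 0" using LIN_b[OF t, of A1 B1] f by simp
  hence "psi y l t' = 0" using f by simp
  thus ?thesis using bis_psi'[OF y] by simp
qed

lemma h_su11: "su11 h" using Gamma_su11[OF hG] .

lemma h_fix: "moeb h q = q" "moeb h p = p"
proof -
  show "moeb h q = q" using nq by (simp add: nice_def)
  have p1: "cmod p = 1" and "moeb (minv h) p = p" using np by (auto simp: nice_def)
  hence "moeb h (moeb (minv h) p) = moeb h p" by simp
  thus "moeb h p = p" using moeb_moeb_minv[OF h_su11, of p] p1 by simp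
qed

lemma h_shift: "\<exists>\<tau>. \<forall>t. moeb h (c t) = c (t + \<tau>)"
  using SHIFT[OF geo] geo_moeb[OF geo h_su11] h_fix by simp

lemma tile_moeb: "x \<in> Gamma a b \<Longrightarrow> y \<in> Gamma a b \<Longrightarrow> moeb x ` tile a b y = tile a b (mmul x y)"
  using tile_mmul Gamma_su11 by simp

lemma bis_Dc: "bis l \<subseteq> Dc l" by (auto simp: bis_def)

lemma bis_inj: assumes x: "x \<in> Gamma a b" and z1: "z \<in> moeb x ` bis l" and z2: "z \<in> moeb x ` bis l'"
  shows "l = l'"
proof -
  obtain u where u: "u \<in> bis l" "z = moeb x u" using z1 by blast
  obtain v where v: "v \<in> bis l'" "z = moeb x v" using z2 by blast
  have "u = v" using moeb_inj_disk[OF Gamma_su11[OF x]] u v bis_disk by blast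
  thus ?thesis using u v Dc_disj bis_Dc by blast
qed

lemma TILE3:
  assumes x: "x \<in> Gamma a b" and y: "y \<in> Gamma a b" and L: "\<And>t. c t \<in> moeb x ` bis f"
    and Y: "\<And>t. c t \<in> tile a b y"
  shows "y = x \<or> y = mmul x (lm f)"
proof -
  have tx: "c 0 \<in> tile a b x" using L[of 0] bis_PP tile_PP by blast
  consider "y = x" | "tile a b x \<inter> tile a b y = {}" | g where "y = mmul x (lm g)" "tile a b x \<inter> tile a b y \<subseteq> moeb x ` bis g"
    using TT[OF x y] by blast
  thus ?thesis
  proof cases
    case 1 thus ?thesis by simp
  next
    case 2 thus ?thesis using tx Y[of 0] by blast
  next
    case 3
    hence "c 0 \<in> moeb x ` bis g" using tx Y[of 0] by blast
    hence "g = f" using bis_inj[OF x _ L[of 0]] by blast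
    thus ?thesis using 3 by simp
  qed
qed

lemma lm_ne_mid: "lm l \<noteq> mid"
  using FREE_mid[of "[l]"] by (simp add: wm_single)

lemma lm_sq_ne: "mmul (lm l) (lm l) \<noteq> mid"
proof -
  have "l \<noteq> inv_letter l" using inv_letter_neq[of l] by metis
  thus ?thesis using FREE_mid[of "[l, l]"] by (simp add: wm_Cons)
qed

lemma mmul_cancel_l: assumes "su11 x" "mmul x y = mmul x z" shows "y = z"
proof -
  have "mmul (minv x) (mmul x y) = mmul (minv x) (mmul x z)" using assms(2) by simp
  thus ?thesis by (simp add: mmul_assoc[symmetric] minv_mmul_self[OF assms(1)])
qed

lemma mmul_cancel_r: assumes "su11 x" "mmul y x = mmul z x" shows "y = z"
proof -
  have "mmul (mmul y x) (minv x) = mmul (mmul z x) (minv x)" using assms(2) by simp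
  thus ?thesis by (simp add: mmul_assoc mmul_minv[OF assms(1)])
qed

lemma NL: assumes x: "x \<in> Gamma a b" shows "\<not> (\<forall>t. c t \<in> moeb x ` bis f)"
proof
  assume L: "\<forall>t. c t \<in> moeb x ` bis f"
  obtain \<tau> where tau: "\<And>t. moeb h (c t) = c (t + \<tau>)" using h_shift by blast
  have xf: "mmul x (lm f) \<in> Gamma a b" using Gamma_mmul[OF x Gamma_lm] .
  have T1: "c t \<in> tile a b x" for t using L bis_PP tile_PP by blast
  have T2: "c t \<in> tile a b (mmul x (lm f))" for t
  proof -
    have "c t \<in> moeb x ` (moeb (lm f) ` PP)" using L bis_tile_lm by blast
    thus ?thesis using tile_moeb[OF x Gamma_lm] tile_PP by simp
  qed
  have hT: "c t \<in> tile a b (mmul h y)" if "y \<in> Gamma a b" "\<And>t. c t \<in> tile a b y" for y t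
  proof -
    have "c t = moeb h (c (t - \<tau>))" using tau[of "t - \<tau>"] by simp
    hence "c t \<in> moeb h ` tile a b y" using that(2) by blast
    thus ?thesis using tile_moeb[OF hG that(1)] by simp
  qed
  have hx: "mmul h x \<in> Gamma a b" using Gamma_mmul[OF hG x] .
  have hxf: "mmul h (mmul x (lm f)) \<in> Gamma a b" using Gamma_mmul[OF hG xf] .
  have sx: "su11 x" using Gamma_su11[OF x] .
  have c1: "mmul h x = x \<or> mmul h x = mmul x (lm f)"
    using TILE3[OF x hx] L hT[OF x T1] by blast
  have c2: "mmul h (mmul x (lm f)) = x \<or> mmul h (mmul x (lm f)) = mmul x (lm f)"
    using TILE3[OF x hxf] L hT[OF xf T2] by blast
  show False
  proof (cases "mmul h x = x")
    case True
    hence "mmul h x = mmul mid x" by simp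
    hence "h = mid" using mmul_cancel_r[OF sx] by blast
    thus False using hnid by simp
  next
    case False
    hence e1: "mmul h x = mmul x (lm f)" using c1 by simp
    have e2: "mmul h (mmul x (lm f)) = mmul x (mmul (lm f) (lm f))" using e1 by (metis mmul_assoc)
    show False
    proof (cases "mmul h (mmul x (lm f)) = x")
      case True
      hence "mmul x (mmul (lm f) (lm f)) = mmul x mid" using e2 by simp
      hence "mmul (lm f) (lm f) = mid" using mmul_cancel_l[OF sx] by blast
      thus False using lm_sq_ne by simp
    next
      case False
      hence "mmul x (mmul (lm f) (lm f)) = mmul x (lm f)" using c2 e2 by simp
      hence "mmul (lm f) (lm f) = mmul mid (lm f)" using mmul_cancel_l[OF sx] by simp
      hence "lm f = mid" using mmul_cancel_r[OF su11_lm] by blast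
      thus False using lm_ne_mid by simp
    qed
  qed
qed

end

lemma red_ok_snoc: "red_ok (xs @ [y]) \<longleftrightarrow> red_ok xs \<and> (xs \<noteq> [] \<longrightarrow> y \<noteq> inv_letter (last xs))"
proof (induction xs rule: red_ok.induct)
  case 1 thus ?case by simp
next
  case (2 x) thus ?case by simp
next
  case (3 x y' r) thus ?case by simp
qed

lemma red_ok_map_upt:
  assumes "\<And>m. Suc m < d \<Longrightarrow> f (Suc m) \<noteq> inv_letter (f m)"
  shows "red_ok (map f [0..<d])"
  using assms
proof (induction d)
  case 0 thus ?case by simp
next
  case (Suc d)
  have ih: "red_ok (map f [0..<d])" using Suc by simp
  show ?case
  proof (cases d)
    case 0 thus ?thesis by simp
  next
    case (Suc d')
    have fd: "f d \<noteq> inv_letter (f d')" using Suc.prems[of d'] Suc by simp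
    have m: "map f [0..<Suc d] = map f [0..<d] @ [f d]" by simp
    have l: "last (map f [0..<d]) = f d'" using Suc by simp
    have ne: "map f [0..<d] \<noteq> []" using Suc by simp
    show ?thesis unfolding m red_ok_snoc using ih fd l ne by simp
  qed
qed

context cod begin

lemma G_pred: "G (k - 1) = mmul (G k) (minv (lm (e (k - 1))))"
proof -
  have "G k = mmul (G (k - 1)) (lm (e (k - 1)))" using Gs[of "k - 1"] by simp
  thus ?thesis by (simp add: mmul_assoc mmul_minv su11_lm)
qed

lemma ADJ:
  assumes "c t \<in> tile a b (G k)" "c t \<in> tile a b (G (k + 1))"
  shows "c t \<in> moeb (G k) ` bis (e k)"
proof -
  have Gk: "G k \<in> Gamma a b" by (rule G_Gamma)
  have "tile a b (G (k + 1)) = moeb (G k) ` (moeb (lm (e k)) ` PP)"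
    using Gs[of k] tile_moeb[OF Gk Gamma_lm] tile_PP by simp
  hence "cy (G k) t \<in> moeb (lm (e k)) ` PP" using assms(2) mem_img[OF Gk] wm_disk PP_disk
    by (metis (no_types, lifting) image_subset_iff su11_lm moeb_disk subsetD)
  moreover have "cy (G k) t \<in> PP" using assms(1) mem_tile[OF Gk] by simp
  ultimately have "cy (G k) t \<in> bis (e k)" using PP_tile_lm by blast
  thus ?thesis using mem_bis[OF Gk] by simp
qed

lemma PL:
  assumes y: "y \<in> Gamma a b" and ct: "c t \<in> tile a b y"
  shows "\<exists>j. y = G j \<and> s j \<le> t \<and> t \<le> s (j + 1)"
proof -
  obtain k where k1: "s k \<le> t" and k2: "t < s (k + 1)" using cover by blast
  have Gk: "G k \<in> Gamma a b" by (rule G_Gamma)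
  have ctk: "c t \<in> tile a b (G k)" using Gt' k1 k2 by simp
  consider "y = G k" | "tile a b (G k) \<inter> tile a b y = {}"
    | l where "y = mmul (G k) (lm l)" "tile a b (G k) \<inter> tile a b y \<subseteq> moeb (G k) ` bis l"
    using TT[OF Gk y] by blast
  thus ?thesis
  proof cases
    case 1 thus ?thesis using k1 k2 by auto
  next
    case 2 thus ?thesis using ct ctk by blast
  next
    case 3
    have cb: "c t \<in> moeb (G k) ` bis l" using 3 ct ctk by blast
    show ?thesis
    proof (cases "s k < t")
      case True
      have "\<forall>t'. c t' \<in> moeb (G k) ` bis l"
        using LINE_INT[OF Gk True k2 Gt'[of k "s k"] Gt'[of k "s (k + 1)"] cb] s_le by simp
      thus ?thesis using NL[OF Gk] by blast
    next
      case False
      hence tk: "t = s k" using k1 by simp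
      define k' where "k' = k - 1"
      have kk: "k = k' + 1" by (simp add: k'_def)
      have Gk': "G k' \<in> Gamma a b" by (rule G_Gamma)
      have ctk': "c t \<in> tile a b (G k')" using Gt'[of k' t] tk kk s_le by simp
      consider "y = G k'" | "tile a b (G k') \<inter> tile a b y = {}"
        | l' where "y = mmul (G k') (lm l')" "tile a b (G k') \<inter> tile a b y \<subseteq> moeb (G k') ` bis l'"
        using TT[OF Gk' y] by blast
      thus ?thesis
      proof cases
        case 1 thus ?thesis using tk kk s_le by auto
      next
        case 2 thus ?thesis using ct ctk' by blast
      next
        case 3
        have c1: "c t \<in> moeb (G k') ` bis l'" using 3 ct ctk' by blast
        have c2: "c t \<in> moeb (G k') ` bis (e k')" using ADJ[of t k'] ctk' ctk kk by simp
        have "l' = e k'" using bis_inj[OF Gk' c1 c2] .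
        hence "y = G k" using 3 Gs[of k'] kk by simp
        thus ?thesis using k1 k2 by auto
      qed
    qed
  qed
qed

lemma red_e: "e (k + 1) \<noteq> inv_letter (e k)"
proof
  assume E: "e (k + 1) = inv_letter (e k)"
  have G2: "G (k + 2) = G k"
  proof -
    have "G (k + 2) = mmul (mmul (G k) (lm (e k))) (lm (e (k + 1)))"
      using Gs[of "k + 1"] Gs[of k] by (simp add: add.assoc)
    also have "\<dots> = G k" using E by (simp add: lm_inv mmul_assoc mmul_minv su11_lm)
    finally show ?thesis .
  qed
  have Gk: "G k \<in> Gamma a b" by (rule G_Gamma)
  have a1: "c (s k) \<in> tile a b (G k)" using Gt'[of k "s k"] s_le by simp
  have a2: "c (s (k + 3)) \<in> tile a b (G k)" using Gt'[of "k + 2" "s (k + 3)"] s_le G2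
    by (simp add: add.assoc)
  have inG: "c t \<in> tile a b (G k)" if "s (k + 1) \<le> t" "t \<le> s (k + 2)" for t
    using CONV[OF Gk _ _ a1 a2] that s_le[of k "k+1"] s_le[of "k+2" "k+3"] by simp
  have inG1: "c t \<in> tile a b (G (k + 1))" if "s (k + 1) \<le> t" "t \<le> s (k + 2)" for t
    using Gt'[of "k + 1" t] that by (simp add: add.assoc)
  have b1: "c (s (k + 1)) \<in> moeb (G k) ` bis (e k)"
    using ADJ inG inG1 s_le[of "k+1" "k+2"] by simp
  have b2: "c (s (k + 2)) \<in> moeb (G k) ` bis (e k)"
    using ADJ inG inG1 s_le[of "k+1" "k+2"] by simp
  have ne: "s (k + 1) \<noteq> s (k + 2)" using s_less[of "k+1" "k+2"] by simp
  have "\<forall>t. c t \<in> moeb (G k) ` bis (e k)" using LINE_ALL[OF Gk ne b1 b2] by blast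
  thus False using NL[OF Gk] by blast
qed

definition seg :: "int \<Rightarrow> nat \<Rightarrow> letter list" where
  "seg i d = map (\<lambda>m. e (i + int m)) [0..<d]"

lemma seg_Suc: "seg i (Suc d) = seg i d @ [e (i + int d)]"
  by (simp add: seg_def)

lemma G_seg: "G (i + int d) = mmul (G i) (wm (seg i d))"
proof (induction d)
  case 0 thus ?case by (simp add: seg_def)
next
  case (Suc d)
  have "G (i + int (Suc d)) = mmul (G (i + int d)) (lm (e (i + int d)))"
    using Gs[of "i + int d"] by (simp add: algebra_simps)
  also have "\<dots> = mmul (G i) (wm (seg i (Suc d)))"
    using Suc by (simp add: seg_Suc wm_append wm_single mmul_assoc)
  finally show ?case .
qed

lemma red_ok_seg: "red_ok (seg i d)"
  unfolding seg_def
proof (rule red_ok_map_upt)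
  fix m assume "Suc m < d"
  show "e (i + int (Suc m)) \<noteq> inv_letter (e (i + int m))"
    using red_e[of "i + int m"] by (simp add: algebra_simps)
qed

lemma G_inj_lt: assumes "i < j" shows "G i \<noteq> G j"
proof
  assume E: "G i = G j"
  define d where "d = nat (j - i)"
  have j: "j = i + int d" using assms by (simp add: d_def)
  have "mmul (G i) (wm (seg i d)) = mmul (G i) mid" using G_seg[of i d] E j by simp
  hence "wm (seg i d) = mid" using mmul_cancel_l[OF su11_G] by blast
  moreover have "seg i d \<noteq> []" using assms by (simp add: seg_def d_def)
  ultimately show False using FREE_mid[OF red_ok_seg] by blast
qed

lemma G_inj: "G i = G j \<Longrightarrow> i = j"
  using G_inj_lt by (metis linorder_neqE)

lemma TIME: "c T \<in> tile a b (G i) \<Longrightarrow> s i \<le> T \<and> T \<le> s (i + 1)"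
  using PL[OF G_Gamma] G_inj by blast


lemma h_tile: "y \<in> Gamma a b \<Longrightarrow> moeb h (c t) \<in> tile a b (mmul h y) \<longleftrightarrow> c t \<in> tile a b y"
proof -
  assume y: "y \<in> Gamma a b"
  have "tile a b (mmul h y) = moeb h ` tile a b y" using tile_moeb[OF hG y] by simp
  moreover have "inj_on (moeb h) disk" using moeb_inj_disk[OF h_su11] by (meson inj_onI)
  moreover have "tile a b y \<subseteq> disk" using tile_PP moeb_disk[OF Gamma_su11[OF y]] PP_disk by auto
  ultimately show ?thesis using cdisk by (simp add: inj_on_image_mem_iff)
qed

lemma h_G: "\<exists>m. \<forall>k. mmul h (G k) = G (k + m)"
proof -
  obtain \<tau> where tau: "\<And>t. moeb h (c t) = c (t + \<tau>)" using h_shift by blast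
  define tm where "tm k = (s k + s (k + 1)) / 2" for k
  have tm1: "s k < tm k" "tm k < s (k + 1)" for k using s_less[of k "k+1"] by (simp_all add: tm_def)
  have hT: "c (t + \<tau>) \<in> tile a b (mmul h y)" if "y \<in> Gamma a b" "c t \<in> tile a b y" for y t
    using h_tile[OF that(1)] that(2) tau by simp
  have ex: "\<exists>j. mmul h (G k) = G j" for k
  proof -
    have "c (tm k + \<tau>) \<in> tile a b (mmul h (G k))" using hT[OF G_Gamma] Gt' tm1[of k] by simp
    thus ?thesis using PL[OF Gamma_mmul[OF hG G_Gamma]] by blast
  qed
  define \<sigma> where "\<sigma> k = (SOME j. mmul h (G k) = G j)" for k
  have sig: "mmul h (G k) = G (\<sigma> k)" for k using someI_ex[OF ex[of k]] by (simp add: \<sigma>_def)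
  have T1: "s (\<sigma> k) \<le> tm k + \<tau> \<and> tm k + \<tau> \<le> s (\<sigma> k + 1)" for k
    using TIME hT[OF G_Gamma] Gt' tm1[of k] sig by (metis less_imp_le)
  have step: "\<sigma> (k + 1) = \<sigma> k + 1" for k
  proof -
    define T where "T = s (k + 1) + \<tau>"
    have a1: "c (s (k + 1)) \<in> tile a b (G k)" using Gt' s_le[of k "k+1"] by simp
    have a2: "c (s (k + 1)) \<in> tile a b (G (k + 1))" using Gt'[of "k+1" "s (k+1)"] s_le[of "k+1" "k+1+1"] by simp
    have b1: "s (\<sigma> k) \<le> T \<and> T \<le> s (\<sigma> k + 1)" using TIME hT[OF G_Gamma a1] sig by (simp add: T_def)
    have b2: "s (\<sigma> (k + 1)) \<le> T \<and> T \<le> s (\<sigma> (k + 1) + 1)" using TIME hT[OF G_Gamma a2] sig by (simp add: T_def)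
    have ne: "\<sigma> (k + 1) \<noteq> \<sigma> k"
    proof
      assume "\<sigma> (k + 1) = \<sigma> k"
      hence "mmul h (G (k + 1)) = mmul h (G k)" using sig by simp
      hence "G (k + 1) = G k" using mmul_cancel_l[OF h_su11] by blast
      thus False using G_inj by fastforce
    qed
    have n1: "\<not> (\<sigma> (k + 1) \<ge> \<sigma> k + 2)"
    proof
      assume "\<sigma> (k + 1) \<ge> \<sigma> k + 2"
      hence "s (\<sigma> k + 1) < s (\<sigma> (k + 1))" using s_less by simp
      thus False using b1 b2 by simp
    qed
    have n2: "\<not> (\<sigma> (k + 1) + 2 \<le> \<sigma> k)"
    proof
      assume "\<sigma> (k + 1) + 2 \<le> \<sigma> k"
      hence "s (\<sigma> (k + 1) + 1) < s (\<sigma> k)" using s_less by simp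
      thus False using b1 b2 by simp
    qed
    have n3: "\<sigma> (k + 1) \<noteq> \<sigma> k - 1"
    proof
      assume E: "\<sigma> (k + 1) = \<sigma> k - 1"
      have "tm (k + 1) + \<tau> \<le> s (\<sigma> (k + 1) + 1)" using T1[of "k + 1"] by simp
      also have "\<dots> = s (\<sigma> k)" using E by simp
      also have "\<dots> \<le> tm k + \<tau>" using T1[of k] by simp
      finally have "tm (k + 1) \<le> tm k" by simp
      moreover have "tm k < tm (k + 1)" using tm1[of k] tm1[of "k + 1"] s_le[of "k+1" "k+1"] by simp
      ultimately show False by simp
    qed
    show ?thesis using ne n1 n2 n3 by linarith
  qed
  have "\<sigma> k = \<sigma> 0 + k" for k
  proof (induction k rule: int_induct[where k=0])
    case base thus ?case by simp
  next
    case (step1 i) thus ?case using step[of i] by simp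
  next
    case (step2 i) thus ?case using step[of "i - 1"] by simp
  qed
  thus ?thesis using sig by (metis add.commute)
qed

end

lemma Qf_iter: "su11 W \<Longrightarrow> x \<in> disk \<Longrightarrow> y \<in> disk \<Longrightarrow> Qf ((moeb W ^^ j) x) ((moeb W ^^ j) y) = Qf x y"
  by (induction j) (simp_all add: Qf_moeb iter_disk)

lemma nice_from_shift:
  assumes W: "su11 W" and cd: "\<And>t. c t \<in> disk" and sh: "\<And>t. moeb W (c t) = c (t + \<tau>)"
    and lim: "(\<lambda>j. c (real j * \<tau>)) \<longlonglongrightarrow> \<xi>" and x1: "cmod \<xi> = 1" and fx: "moeb W \<xi> = \<xi>"
  shows "nice W \<xi>"
proof -
  have it: "(moeb W ^^ j) (c 0) = c (real j * \<tau>)" for j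
    by (induction j) (simp_all add: sh algebra_simps)
  have "(\<lambda>j. (moeb W ^^ j) z) \<longlonglongrightarrow> \<xi>" if z: "z \<in> disk" for z
  proof (rule BD[where z="\<lambda>j. (moeb W ^^ j) (c 0)"])
    show "(\<lambda>j. (moeb W ^^ j) (c 0)) \<longlonglongrightarrow> \<xi>" using lim it by simp
    show "cmod \<xi> = 1" by (rule x1)
    show "(moeb W ^^ j) (c 0) \<in> disk" for j using iter_disk[OF W cd] .
    show "(moeb W ^^ j) z \<in> disk" for j using iter_disk[OF W z] .
    show "Qf ((moeb W ^^ j) (c 0)) ((moeb W ^^ j) z) \<le> Qf (c 0) z" for j
      using Qf_iter[OF W cd z] by simp
  qed
  thus ?thesis using x1 fx by (simp add: nice_def)
qed

context cod begin

lemma AXg: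
  assumes k: "su11 k" and X: "su11 X" and n1: "nice X q" and n2: "nice (minv X) p"
  shows "axis (mmul (mmul k X) (minv k)) = moeb k ` range c"
proof -
  have a1: "nice (mmul (mmul k X) (minv k)) (moeb k q)" using CONJ[OF k X n1] .
  have a2: "nice (minv (mmul (mmul k X) (minv k))) (moeb k p)"
    using CONJ[OF k su11_minv[OF X] n2] by (simp add: minv_conj)
  have g: "geodesic_param (\<lambda>t. moeb k (c t)) (moeb k p) (moeb k q)" using geo_moeb[OF geo k] .
  have "axis (mmul (mmul k X) (minv k)) = range (\<lambda>t. moeb k (c t))" using AXIS[OF a1 a2 g] .
  thus ?thesis by (simp add: image_image)
qed

end

locale per = cod +
  fixes n :: nat
  assumes npos: "0 < n" and eper: "\<And>k. e (k + int n) = e k"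
begin

definition W where "W = G (int n)"

lemma W_Gamma: "W \<in> Gamma a b" by (simp add: W_def G_Gamma)
lemma su11_W: "su11 W" using Gamma_su11[OF W_Gamma] .

lemma G_per: "G (k + int n) = mmul W (G k)"
proof (induction k rule: int_induct[where k=0])
  case base thus ?case by (simp add: W_def G0)
next
  case (step1 i)
  have "G (i + 1 + int n) = mmul (G (i + int n)) (lm (e (i + int n)))" using Gs[of "i + int n"] by (simp add: algebra_simps)
  also have "\<dots> = mmul W (G (i + 1))" using step1 eper Gs[of i] by (simp add: mmul_assoc)
  finally show ?case .
next
  case (step2 i)
  have "G (i - 1 + int n) = mmul (G (i + int n)) (minv (lm (e (i - 1 + int n))))" using G_pred[of "i + int n"] by (simp add: algebra_simps)
  also have "\<dots> = mmul W (G (i - 1))" using step2 eper[of "i - 1"] G_pred[of i] by (simp add: mmul_assoc)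
  finally show ?case .
qed

lemma hW: "mmul h W = mmul W h"
proof -
  obtain m where m: "\<And>k. mmul h (G k) = G (k + m)" using h_G by blast
  have hm: "h = G m" using m[of 0] G0 by simp
  have "mmul h W = G (int n + m)" using m[of "int n"] by (simp add: W_def)
  also have "\<dots> = mmul W (G m)" using G_per[of m] by (simp add: add.commute)
  finally show ?thesis using hm by simp
qed

lemma hiW: "mmul (minv h) W = mmul W (minv h)"
proof -
  have "mmul (minv h) (mmul (mmul h W) (minv h)) = mmul (minv h) (mmul (mmul W h) (minv h))" using hW by simp
  thus ?thesis using h_su11 by (simp add: mmul_assoc[symmetric] minv_mmul_self) (simp add: mmul_assoc mmul_minv)
qed

lemma comm_fix:
  assumes X: "su11 X" and cm: "mmul X W = mmul W X" and nx: "nice X \<xi>"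
  shows "moeb W \<xi> = \<xi>"
proof -
  have x1: "cmod \<xi> = 1" and cv: "\<And>z. z \<in> disk \<Longrightarrow> (\<lambda>j. (moeb X ^^ j) z) \<longlonglongrightarrow> \<xi>" using nx by (auto simp: nice_def)
  have com: "moeb X (moeb W z) = moeb W (moeb X z)" if "z \<in> disk" for z
    using moeb_mmul[OF X su11_W, of z] moeb_mmul[OF su11_W X, of z] cm that by (simp add: in_disk)
  have it: "(moeb X ^^ j) (moeb W z) = moeb W ((moeb X ^^ j) z)" if z: "z \<in> disk" for z j
  proof (induction j)
    case 0 thus ?case by simp
  next
    case (Suc j) thus ?case using com[OF iter_disk[OF X z]] by simp
  qed
  have l1: "(\<lambda>j. (moeb X ^^ j) (moeb W 0)) \<longlonglongrightarrow> \<xi>" using cv moeb_disk[OF su11_W zero_disk] by blast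
  have l2: "(\<lambda>j. moeb W ((moeb X ^^ j) 0)) \<longlonglongrightarrow> moeb W \<xi>"
    using isCont_tendsto_compose[OF isCont_moeb[OF su11_W] cv[OF zero_disk]] x1 by simp
  have "(\<lambda>j. moeb W ((moeb X ^^ j) 0)) \<longlonglongrightarrow> \<xi>" using l1 it[OF zero_disk] by simp
  thus ?thesis using l2 LIMSEQ_unique by blast
qed

lemma W_fix: "moeb W q = q" "moeb W p = p"
  using comm_fix[OF h_su11 hW nq] comm_fix[OF su11_minv[OF h_su11] hiW np] by simp_all

lemma W_shift: "\<exists>\<tau>>0. \<forall>t. moeb W (c t) = c (t + \<tau>)"
proof -
  have g: "geodesic_param (\<lambda>t. moeb W (c t)) p q" using geo_moeb[OF geo su11_W] W_fix by simp
  obtain \<tau> where tau: "\<And>t. moeb W (c t) = c (t + \<tau>)" using SHIFT[OF geo g] by blast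
  define t0 where "t0 = (s 0 + s 1) / 2"
  have t0: "s 0 < t0" "t0 < s 1" using s_less[of 0 1] by (simp_all add: t0_def)
  have "c t0 \<in> tile a b (G 0)" using Gt'[of 0 t0] t0 by simp
  hence "moeb W (c t0) \<in> tile a b (mmul W (G 0))"
    using tile_moeb[OF W_Gamma G_Gamma] by blast
  hence "c (t0 + \<tau>) \<in> tile a b (G (int n))" using tau G_per[of 0] by simp
  hence "s (int n) \<le> t0 + \<tau>" using TIME by blast
  moreover have "s 1 \<le> s (int n)" using s_le npos by simp
  ultimately have "0 < \<tau>" using t0 by simp
  thus ?thesis using tau by blast
qed

lemma nice_W: "nice W q \<and> nice (minv W) p"
proof -
  obtain \<tau> where tp: "0 < \<tau>" and tau: "\<And>t. moeb W (c t) = c (t + \<tau>)" using W_shift by blast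
  have cq: "(c \<longlongrightarrow> q) at_top" and cp: "(c \<longlongrightarrow> p) at_bot" using geo by (simp_all add: geodesic_param_def)
  have q1: "cmod q = 1" and p1: "cmod p = 1" using nq np by (simp_all add: nice_def)
  have f1: "filterlim (\<lambda>j. real j * \<tau>) at_top sequentially"
    using filterlim_tendsto_pos_mult_at_top[OF tendsto_const tp filterlim_real_sequentially]
    by (simp add: mult.commute)
  have l1: "(\<lambda>j. c (real j * \<tau>)) \<longlonglongrightarrow> q" using filterlim_compose[OF cq f1] by simp
  have n1: "nice W q" using nice_from_shift[OF su11_W cdisk tau l1 q1 W_fix(1)] .
  have tau': "moeb (minv W) (c t) = c (t + - \<tau>)" for t
  proof -
    have "moeb W (c (t - \<tau>)) = c t" using tau[of "t - \<tau>"] by simp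
    hence "moeb (minv W) (moeb W (c (t - \<tau>))) = moeb (minv W) (c t)" by simp
    thus ?thesis using moeb_minv_moeb[OF su11_W, of "c (t - \<tau>)"] cdisk by (simp add: in_disk less_imp_le)
  qed
  have f2: "filterlim (\<lambda>j. real j * - \<tau>) at_bot sequentially"
    using f1 by (simp add: filterlim_uminus_at_bot)
  have l2: "(\<lambda>j. c (real j * - \<tau>)) \<longlonglongrightarrow> p" using filterlim_compose[OF cp f2] by simp
  have fp: "moeb (minv W) p = p" using W_fix(2) moeb_minv_moeb[OF su11_W, of p] p1 by simp
  have n2: "nice (minv W) p" using nice_from_shift[OF su11_minv[OF su11_W] cdisk tau' l2 p1 fp] .
  show ?thesis using n1 n2 by simp
qed


lemma W_seg: "W = wm (seg 0 n)"
  using G_seg[of 0 n] G0 by (simp add: W_def)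

lemma rot_W: assumes i: "i < n" shows "wm (rotate i (seg 0 n)) = mmul (mmul (minv (G (int i))) W) (G (int i))"
proof -
  have len: "length (seg 0 n) = n" by (simp add: seg_def)
  have r: "rotate i (seg 0 n) = drop i (seg 0 n) @ take i (seg 0 n)"
    using rotate_drop_take[of i "seg 0 n"] i len by simp
  have tk: "take i (seg 0 n) = seg 0 i" using i by (simp add: seg_def take_map)
  have Gi: "G (int i) = wm (seg 0 i)" using G_seg[of 0 i] G0 by simp
  have "W = mmul (wm (take i (seg 0 n))) (wm (drop i (seg 0 n)))"
    using W_seg wm_append[of "take i (seg 0 n)" "drop i (seg 0 n)"] by simp
  hence "W = mmul (G (int i)) (wm (drop i (seg 0 n)))" using tk Gi by simp
  hence d: "wm (drop i (seg 0 n)) = mmul (minv (G (int i))) W"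
    using su11_G by (simp add: mmul_assoc[symmetric] minv_mmul_self)
  show ?thesis using r d tk Gi by (simp add: wm_append)
qed

lemma Lcyc_axis: "i < n \<Longrightarrow> axis (wm (rotate i (seg 0 n))) = moeb (minv (G (int i))) ` range c"
  using AXg[OF su11_minv[OF su11_G] su11_W] nice_W rot_W by simp

lemma F_per: "moeb (minv (G (j + int n))) ` range c = moeb (minv (G j)) ` range c"
proof -
  obtain \<tau> where tau: "\<And>t. moeb W (c t) = c (t + \<tau>)" using W_shift by blast
  have mw: "moeb (minv W) (c t) = c (t - \<tau>)" for t
  proof -
    have "moeb (minv W) (moeb W (c (t - \<tau>))) = c (t - \<tau>)"
      using moeb_minv_moeb[OF su11_W] cdisk by (simp add: in_disk less_imp_le)
    thus ?thesis using tau[of "t - \<tau>"] by simp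
  qed
  have R: "moeb (minv W) ` range c = range c"
  proof
    show "moeb (minv W) ` range c \<subseteq> range c" using mw by auto
    show "range c \<subseteq> moeb (minv W) ` range c"
    proof
      fix z assume "z \<in> range c"
      then obtain t where "z = c t" by blast
      hence "z = moeb (minv W) (c (t + \<tau>))" using mw[of "t + \<tau>"] by simp
      thus "z \<in> moeb (minv W) ` range c" by blast
    qed
  qed
  have "minv (G (j + int n)) = mmul (minv (G j)) (minv W)" using G_per[of j] by (simp add: minv_mmul)
  hence "moeb (minv (G (j + int n))) ` range c = moeb (minv (G j)) ` (moeb (minv W) ` range c)"
    using moeb_mmul[OF su11_minv[OF su11_G] su11_minv[OF su11_W]] cdisk
    by (auto simp: image_iff in_disk less_imp_le moeb_cdisk)
  thus ?thesis using R by simp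
qed

lemma F_mod: "moeb (minv (G j)) ` range c = moeb (minv (G (j mod int n))) ` range c"
proof -
  have gen: "moeb (minv (G (r + int n * k))) ` range c = moeb (minv (G r)) ` range c" for r k
  proof (induction k rule: int_induct[where k=0])
    case base thus ?case by simp
  next
    case (step1 i) thus ?case using F_per[of "r + int n * i"] by (simp add: algebra_simps)
  next
    case (step2 i) thus ?case using F_per[of "r + int n * (i - 1)"] by (simp add: algebra_simps)
  qed
  have "j = j mod int n + int n * (j div int n)" by simp
  thus ?thesis using gen[of "j mod int n" "j div int n"] by metis
qed

lemma MAINP:
  assumes v: "v \<in> Gamma a b"
  shows "moeb v ` range c \<inter> PP \<noteq> {} \<longleftrightarrow> moeb v ` range c \<in> {axis (wm (rotate i (seg 0 n))) | i. i < n}"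
proof
  assume "moeb v ` range c \<inter> PP \<noteq> {}"
  then obtain t where t: "moeb v (c t) \<in> PP" by blast
  have sv: "su11 v" using Gamma_su11[OF v] .
  have "c t = moeb (minv v) (moeb v (c t))" using moeb_minv_moeb[OF sv] cdisk by (simp add: in_disk less_imp_le)
  hence "c t \<in> tile a b (minv v)" using t tile_PP by blast
  then obtain j where j: "minv v = G j" using PL[OF Gamma_minv[OF v]] by blast
  have vj: "v = minv (G j)" using j by (metis minv_minv)
  define i where "i = nat (j mod int n)"
  have i: "i < n" "int i = j mod int n" using npos by (simp_all add: i_def nat_less_iff)
  have "moeb v ` range c = moeb (minv (G (int i))) ` range c" using F_mod[of j] vj i by simp
  also have "\<dots> = axis (wm (rotate i (seg 0 n)))" using Lcyc_axis[OF i(1)] by simp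
  finally show "moeb v ` range c \<in> {axis (wm (rotate i (seg 0 n))) | i. i < n}" using i by blast
next
  assume "moeb v ` range c \<in> {axis (wm (rotate i (seg 0 n))) | i. i < n}"
  then obtain i where i: "i < n" and E: "moeb v ` range c = axis (wm (rotate i (seg 0 n)))" by blast
  have "cy (G (int i)) (s (int i)) \<in> PP" using mem_tile[OF G_Gamma] Gt'[of "int i" "s (int i)"] s_le by simp
  moreover have "cy (G (int i)) (s (int i)) \<in> axis (wm (rotate i (seg 0 n)))"
    using Lcyc_axis[OF i] by (simp add: cy_def)
  ultimately show "moeb v ` range c \<inter> PP \<noteq> {}" using E by blast
qed

end

lemma moeb_id_disk:
  assumes g: "su11 g" and idd: "\<And>z. z \<in> disk \<Longrightarrow> moeb g z = z"
  shows "moeb g = id"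
proof -
  obtain al be where gg: "g = (al, be)" by force
  have a0: "al \<noteq> 0"
  proof
    assume "al = 0"
    hence "(cmod al)^2 = 0" by simp
    moreover have "(cmod al)^2 = 1 + (cmod be)^2" using su11_norm[OF g] by (simp add: gg)
    ultimately show False by (smt (verit) zero_le_power2)
  qed
  have "moeb g 0 = 0" using idd[OF zero_disk] .
  hence b0: "be = 0" using a0 by (simp add: moeb_def gg)
  have hd: "(1/2 :: complex) \<in> disk" by (simp add: disk_def)
  have "moeb g (1/2) = 1/2" using idd[OF hd] .
  hence "al / cnj al = 1" using a0 b0 by (simp add: moeb_def gg field_simps)
  hence ac: "cnj al = al" using a0 by (simp add: divide_eq_1_iff)
  show ?thesis
  proof
    fix z show "moeb g z = id z" using ac a0 b0 by (simp add: moeb_def gg)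
  qed
qed

theorem proposition1:
  fixes a b g h0 :: mat and c :: "real \<Rightarrow> complex" and e :: "int \<Rightarrow> letter" and n :: nat
    and L :: "complex set"
  assumes "schottky a b"
    and "g \<in> Gamma a b" and "moeb g \<noteq> id"
    and "h0 \<in> Gamma a b"
    and "geodesic_param c (repelling_fp (mmul (mmul h0 g) (minv h0)))
                          (attracting_fp (mmul (mmul h0 g) (minv h0)))"
    and "coding a b c e"
    and "n > 0" and "\<forall>k. e (k + int n) = e k"
    and "L \<in> lifts a b g"
  shows "L \<inter> fundom a b \<noteq> {} \<longleftrightarrow> L \<in> Lcyc a b e n"
proof -
  interpret S: schot a b using assms(1) by (unfold_locales)
  define h where "h = mmul (mmul h0 g) (minv h0)"
  have hG: "h \<in> Gamma a b" unfolding h_def using assms(2,4) S.Gamma_mmul S.Gamma_minv by blast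
  have sh: "su11 h" using S.Gamma_su11[OF hG] .
  have s0: "su11 h0" using S.Gamma_su11[OF assms(4)] .
  have sg: "su11 g" using S.Gamma_su11[OF assms(2)] .
  have gh: "g = mmul (mmul (minv h0) h) h0"
    unfolding h_def using s0 by (simp add: mmul_assoc minv_mmul_self) (simp add: mmul_assoc[symmetric] minv_mmul_self)
  have nid: "\<exists>z\<in>disk. moeb h z \<noteq> z"
  proof (rule ccontr)
    assume "\<not> (\<exists>z\<in>disk. moeb h z \<noteq> z)"
    hence hid: "\<And>z. z \<in> disk \<Longrightarrow> moeb h z = z" by blast
    have "moeb g z = z" if z: "z \<in> disk" for z
    proof -
      have z1: "cmod z \<le> 1" using z by (simp add: in_disk)
      have "moeb g z = moeb (mmul (minv h0) h) (moeb h0 z)"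
        unfolding gh using moeb_mmul[OF su11_mmul[OF su11_minv[OF s0] sh] s0 z1] .
      also have "\<dots> = moeb (minv h0) (moeb h (moeb h0 z))"
        using moeb_mmul[OF su11_minv[OF s0] sh] moeb_cdisk[OF s0 z1] by simp
      also have "\<dots> = z" using hid[OF moeb_disk[OF s0 z]] moeb_minv_moeb[OF s0 z1] by simp
      finally show ?thesis .
    qed
    hence "moeb g = id" using moeb_id_disk[OF sg] by blast
    thus False using assms(3) by simp
  qed
  have hnid: "h \<noteq> mid" using nid by auto
  have gp: "geodesic_param c (repelling_fp h) (attracting_fp h)" using assms(5) by (simp add: h_def)
  have N: "nice h (attracting_fp h) \<and> nice (minv h) (repelling_fp h)" using H1[OF sh nid gp] .
  obtain s G where sG: "strict_mono s" "filterlim s at_top at_top" "filterlim s at_bot at_bot"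
    "G 0 = mid" "\<forall>k. G (k + 1) = mmul (G k) (letter_mat a b (e k))"
    "\<forall>k. c ` {s k .. s (k + 1)} \<subseteq> tile a b (G k)"
    using assms(6) unfolding coding_def by blast
  interpret P: per a b h c "repelling_fp h" "attracting_fp h" s G e n
    using hG hnid gp N sG assms(1,7,8) by unfold_locales auto
  obtain u where u: "u \<in> Gamma a b" and Lu: "L = axis (mmul (mmul u g) (minv u))"
    using assms(9) by (auto simp: lifts_def)
  define v where "v = mmul u (minv h0)"
  have vG: "v \<in> Gamma a b" unfolding v_def using u assms(4) S.Gamma_mmul S.Gamma_minv by blast
  have sv: "su11 v" using S.Gamma_su11[OF vG] .
  have vh: "mmul (mmul v h) (minv v) = mmul (mmul u g) (minv u)"
  proof -
    have "mmul (mmul v h) (minv v) = mmul (mmul u (mmul (mmul (minv h0) h) h0)) (minv u)"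
      unfolding v_def by (simp add: minv_mmul mmul_assoc)
    thus ?thesis using gh by simp
  qed
  have LA: "L = moeb v ` range c"
    using P.AXg[OF sv sh] N Lu vh by simp
  have LC: "Lcyc a b e n = {axis (word_mat a b (rotate i (P.seg 0 n))) | i. i < n}"
    by (simp add: Lcyc_def P.seg_def)
  show ?thesis using P.MAINP[OF vG] LA LC S.fundom_PP by simp
qed

end
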